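(* Let $(M,g)$ be a Riemannian manifold of dimension $2m=2n+2$ ($n\ge1$) admitting, on an open set $U\subset M$, an orthonormal frame $\mathbf k,\mathbf t,\mathbf x_1,\mathbf y_1,\dots,\mathbf x_n,\mathbf y_n$ such that $[\mathbf x_i,\mathbf x_j]=[\mathbf x_i,\mathbf y_j]=[\mathbf y_i,\mathbf y_j]=0$ for $i\neq j$, and $$[\mathbf k,\mathbf t]=L(\mathbf k+\mathbf t),\quad [\mathbf x_i,\mathbf y_i]=N_i(\mathbf k+\mathbf t),$$ $$[\mathbf k,\mathbf x_i]=A_i\mathbf x_i+B_i\mathbf y_i,\quad [\mathbf k,\mathbf y_i]=C_i\mathbf x_i+D_i\mathbf y_i,\quad [\mathbf t,\mathbf x_i]=E_i\mathbf x_i+F_i\mathbf y_i,\quad [\mathbf t,\mathbf y_i]=G_i\mathbf x_i+H_i\mathbf y_i,$$ for smooth functions $A_i,B_i,C_i,D_i,E_i,F_i,G_i,H_i,L,N_i$ on $U$ satisfying, for $i=1,\dots,n$, $$A_i-D_i=F_i+G_i,\quad B_i+C_i=H_i-E_i,\quad N_i=A_i+D_i=-(E_i+H_i).$$ Let $J$ be the almost complex structure on $U$ defined by $J\mathbf k=\mathbf t$, $J\mathbf t=-\mathbf k$, $J\mathbf x_i=\mathbf y_i$, $J\mathbf y_i=-\mathbf x_i$. Then $(g,J)$ is a Kähler structure on $U$. *)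

theory Defs
  imports "HOL-Analysis.Analysis"
begin

text \<open>Local setting: the open set U is regarded as an open subset of a Euclidean
  space 'a (a coordinate chart); vector fields are maps 'a \<Rightarrow> 'a,
  a Riemannian metric is g :: 'a \<Rightarrow> 'a \<Rightarrow> 'a \<Rightarrow> real
  (g p is the inner product on the tangent space at p), and an almost complex
  structure is J :: 'a \<Rightarrow> 'a \<Rightarrow> 'a (J p is an endomorphism of the tangent space at p).\<close>

fun Ck_on :: "nat \<Rightarrow> 'a::euclidean_space set \<Rightarrow> ('a \<Rightarrow> 'b::real_normed_vector) \<Rightarrow> bool" where
  "Ck_on 0 U f = continuous_on U f"
| "Ck_on (Suc k) U f =
     ((\<forall>p\<in>U. f differentiable (at p)) \<and>
      (\<forall>v. Ck_on k U (\<lambda>p. frechet_derivative f (at p) v)))"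

definition smooth_on :: "'a::euclidean_space set \<Rightarrow> ('a \<Rightarrow> 'b::real_normed_vector) \<Rightarrow> bool" where
  "smooth_on U f \<longleftrightarrow> (\<forall>k. Ck_on k U f)"

definition vf_apply :: "('a::euclidean_space \<Rightarrow> 'a) \<Rightarrow> ('a \<Rightarrow> real) \<Rightarrow> 'a \<Rightarrow> real" where
  "vf_apply X f p = frechet_derivative f (at p) (X p)"

definition lie_bracket :: "('a::euclidean_space \<Rightarrow> 'a) \<Rightarrow> ('a \<Rightarrow> 'a) \<Rightarrow> 'a \<Rightarrow> 'a" where
  "lie_bracket X Y p = frechet_derivative Y (at p) (X p) - frechet_derivative X (at p) (Y p)"

definition riemannian_metric :: "'a::euclidean_space set \<Rightarrow> ('a \<Rightarrow> 'a \<Rightarrow> 'a \<Rightarrow> real) \<Rightarrow> bool" where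
  "riemannian_metric U g \<longleftrightarrow>
     (\<forall>p\<in>U. bilinear (g p) \<and> (\<forall>v w. g p v w = g p w v) \<and> (\<forall>v. v \<noteq> 0 \<longrightarrow> g p v v > 0)) \<and>
     (\<forall>v w. smooth_on U (\<lambda>p. g p v w))"

definition almost_complex_structure :: "'a::euclidean_space set \<Rightarrow> ('a \<Rightarrow> 'a \<Rightarrow> 'a) \<Rightarrow> bool" where
  "almost_complex_structure U J \<longleftrightarrow>
     (\<forall>p\<in>U. linear (J p) \<and> (\<forall>v. J p (J p v) = - v)) \<and>
     (\<forall>v. smooth_on U (\<lambda>p. J p v))"

definition smooth_vector_field :: "'a::euclidean_space set \<Rightarrow> ('a \<Rightarrow> 'a) \<Rightarrow> bool" where
  "smooth_vector_field U X \<longleftrightarrow> smooth_on U X"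

definition acs_apply :: "('a \<Rightarrow> 'a \<Rightarrow> 'a) \<Rightarrow> ('a \<Rightarrow> 'a) \<Rightarrow> 'a \<Rightarrow> 'a" where
  "acs_apply J X = (\<lambda>p. J p (X p))"

definition nijenhuis :: "('a::euclidean_space \<Rightarrow> 'a \<Rightarrow> 'a) \<Rightarrow> ('a \<Rightarrow> 'a) \<Rightarrow> ('a \<Rightarrow> 'a) \<Rightarrow> 'a \<Rightarrow> 'a" where
  "nijenhuis J X Y =
     (\<lambda>p. lie_bracket (acs_apply J X) (acs_apply J Y) p
          - J p (lie_bracket (acs_apply J X) Y p)
          - J p (lie_bracket X (acs_apply J Y) p)
          - lie_bracket X Y p)"

definition fundamental_form :: "('a \<Rightarrow> 'a \<Rightarrow> 'a \<Rightarrow> real) \<Rightarrow> ('a \<Rightarrow> 'a \<Rightarrow> 'a) \<Rightarrow> ('a \<Rightarrow> 'a) \<Rightarrow> ('a \<Rightarrow> 'a) \<Rightarrow> 'a \<Rightarrow> real" where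
  "fundamental_form g J X Y = (\<lambda>p. g p (J p (X p)) (Y p))"

definition ext_deriv2 :: "(('a::euclidean_space \<Rightarrow> 'a) \<Rightarrow> ('a \<Rightarrow> 'a) \<Rightarrow> 'a \<Rightarrow> real)
     \<Rightarrow> ('a \<Rightarrow> 'a) \<Rightarrow> ('a \<Rightarrow> 'a) \<Rightarrow> ('a \<Rightarrow> 'a) \<Rightarrow> 'a \<Rightarrow> real" where
  "ext_deriv2 w X Y Z =
     (\<lambda>p. vf_apply X (w Y Z) p - vf_apply Y (w X Z) p + vf_apply Z (w X Y) p
          - w (lie_bracket X Y) Z p + w (lie_bracket X Z) Y p - w (lie_bracket Y Z) X p)"

definition kaehler_on :: "'a::euclidean_space set \<Rightarrow> ('a \<Rightarrow> 'a \<Rightarrow> 'a \<Rightarrow> real) \<Rightarrow> ('a \<Rightarrow> 'a \<Rightarrow> 'a) \<Rightarrow> bool" where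
  "kaehler_on U g J \<longleftrightarrow>
     riemannian_metric U g \<and> almost_complex_structure U J \<and>
     (\<forall>p\<in>U. \<forall>v w. g p (J p v) (J p w) = g p v w) \<and>
     (\<forall>X Y. smooth_vector_field U X \<longrightarrow> smooth_vector_field U Y \<longrightarrow>
        (\<forall>p\<in>U. nijenhuis J X Y p = 0)) \<and>
     (\<forall>X Y Z. smooth_vector_field U X \<longrightarrow> smooth_vector_field U Y \<longrightarrow> smooth_vector_field U Z \<longrightarrow>
        (\<forall>p\<in>U. ext_deriv2 (fundamental_form g J) X Y Z p = 0))"

end

theory Submission
  imports Defs
begin


lemma fd_cong:
  assumes "open U" "p \<in> U" "\<And>q. q \<in> U \<Longrightarrow> f q = h q"
  shows "frechet_derivative f (at p) = frechet_derivative h (at p)"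
proof -
  have "(f has_derivative D) (at p) \<longleftrightarrow> (h has_derivative D) (at p)" for D
    using has_derivative_transform_within_open[OF _ assms(1,2), of f D UNIV h]
          has_derivative_transform_within_open[OF _ assms(1,2), of h D UNIV f] assms(3)
    by auto
  then show ?thesis unfolding frechet_derivative_def by simp
qed

lemma diff_cong:
  assumes "open U" "p \<in> U" "\<And>q. q \<in> U \<Longrightarrow> f q = h q" "f differentiable (at p)"
  shows "h differentiable (at p)"
proof -
  obtain D where "(f has_derivative D) (at p)" using assms(4) unfolding differentiable_def by blast
  then have "(h has_derivative D) (at p)"
    using has_derivative_transform_within_open[OF _ assms(1,2), of f D UNIV h] assms(3) by blast
  then show ?thesis unfolding differentiable_def by blast
qed

lemma Ck_on_cong:
  assumes "open U" "\<And>q. q \<in> U \<Longrightarrow> f q = h q"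
  shows "Ck_on k U f = Ck_on k U h"
  using assms(2)
proof (induction k arbitrary: f h)
  case 0
  then show ?case unfolding Ck_on.simps by (intro continuous_on_cong) auto
next
  case (Suc k)
  have d: "(\<forall>p\<in>U. f differentiable (at p)) = (\<forall>p\<in>U. h differentiable (at p))"
  proof -
    have "\<And>q. q \<in> U \<Longrightarrow> h q = f q" using Suc.prems by simp
    then show ?thesis using diff_cong[OF assms(1), of _ f h] diff_cong[OF assms(1), of _ h f] Suc.prems by blast
  qed
  have e: "Ck_on k U (\<lambda>p. frechet_derivative f (at p) v) = Ck_on k U (\<lambda>p. frechet_derivative h (at p) v)" for v
  proof (rule Suc.IH)
    fix q assume "q \<in> U"
    then show "frechet_derivative f (at q) v = frechet_derivative h (at q) v"
      using fd_cong[OF assms(1) \<open>q \<in> U\<close> Suc.prems] by simp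
  qed
  show ?case using d e by simp
qed

lemma Ck_on_transfer:
  assumes "open U" "Ck_on k U h" "\<And>q. q \<in> U \<Longrightarrow> f q = h q"
  shows "Ck_on k U f"
  using Ck_on_cong[OF assms(1), of f h k] assms(2,3) by blast

lemma Ck_on_mono: "Ck_on (Suc k) U f \<Longrightarrow> Ck_on k U f"
proof (induction k arbitrary: f)
  case 0
  then show ?case
  proof -
    have "\<forall>p\<in>U. isCont f p" using 0 by (simp add: differentiable_imp_continuous_within)
    then show ?thesis by (simp add: continuous_at_imp_continuous_on)
  qed
next
  case (Suc k)
  then show ?case by simp
qed

lemma Ck_on_const: "Ck_on k U (\<lambda>_. c)"
proof (induction k arbitrary: c)
  case 0 then show ?case by simp
next
  case (Suc k) then show ?case by simp
qed

lemma Ck_on_add: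
  assumes "open U"
  shows "Ck_on k U f \<Longrightarrow> Ck_on k U h \<Longrightarrow> Ck_on k U (\<lambda>q. f q + h q)"
proof (induction k arbitrary: f h)
  case 0 then show ?case by (simp add: continuous_on_add)
next
  case (Suc k)
  have dif: "\<forall>p\<in>U. (\<lambda>q. f q + h q) differentiable (at p)" using Suc.prems by auto
  have "Ck_on k U (\<lambda>p. frechet_derivative (\<lambda>q. f q + h q) (at p) v)" for v
  proof -
    have A: "Ck_on k U (\<lambda>p. frechet_derivative f (at p) v + frechet_derivative h (at p) v)"
      using Suc.prems by (intro Suc.IH) simp_all
    have eq: "frechet_derivative (\<lambda>q. f q + h q) (at p) v = frechet_derivative f (at p) v + frechet_derivative h (at p) v"
      if "p \<in> U" for p
    proof -
      have "((\<lambda>q. f q + h q) has_derivative (\<lambda>v. frechet_derivative f (at p) v + frechet_derivative h (at p) v)) (at p)"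
      proof (intro has_derivative_add)
      have "f differentiable at p" using Suc.prems that by simp
      then show "(f has_derivative frechet_derivative f (at p)) (at p)"
        using frechet_derivative_works by blast
      have "h differentiable at p" using Suc.prems that by simp
      then show "(h has_derivative frechet_derivative h (at p)) (at p)"
        using frechet_derivative_works by blast
    qed
      then show ?thesis by (simp add: frechet_derivative_at[symmetric])
    qed
    show ?thesis by (rule Ck_on_transfer[OF assms A eq])
  qed
  then show ?case using dif by simp
qed

lemma Ck_on_bilinear:
  fixes pr :: "'b::real_normed_vector \<Rightarrow> 'c::real_normed_vector \<Rightarrow> 'd::real_normed_vector"
    and f :: "'a::euclidean_space \<Rightarrow> 'b" and h :: "'a \<Rightarrow> 'c"
  assumes "open U" "bounded_bilinear pr"
  shows "Ck_on k U f \<Longrightarrow> Ck_on k U h \<Longrightarrow> Ck_on k U (\<lambda>q. pr (f q) (h q))"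
proof (induction k arbitrary: f h)
  case 0 then show ?case using bounded_bilinear.continuous_on[OF assms(2), of U f h] by simp
next
  case (Suc k)
  have hd: "((\<lambda>q. pr (f q) (h q)) has_derivative
      (\<lambda>v. pr (f p) (frechet_derivative h (at p) v) + pr (frechet_derivative f (at p) v) (h p))) (at p)"
    if "p \<in> U" for p
  proof (intro bounded_bilinear.FDERIV[OF assms(2)])
      have "f differentiable at p" using Suc.prems that by simp
      then show "(f has_derivative frechet_derivative f (at p)) (at p)"
        using frechet_derivative_works by blast
      have "h differentiable at p" using Suc.prems that by simp
      then show "(h has_derivative frechet_derivative h (at p)) (at p)"
        using frechet_derivative_works by blast
    qed
  have dif: "\<forall>p\<in>U. (\<lambda>q. pr (f q) (h q)) differentiable (at p)" using hd unfolding differentiable_def by blast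
  have "Ck_on k U (\<lambda>p. frechet_derivative (\<lambda>q. pr (f q) (h q)) (at p) v)" for v
  proof -
    have A: "Ck_on k U (\<lambda>p. pr (f p) (frechet_derivative h (at p) v) + pr (frechet_derivative f (at p) v) (h p))"
    proof (intro Ck_on_add[OF assms(1)] Suc.IH)
      show "Ck_on k U f" using Suc.prems(1) by (rule Ck_on_mono)
      show "Ck_on k U h" using Suc.prems(2) by (rule Ck_on_mono)
      show "Ck_on k U (\<lambda>p. frechet_derivative h (at p) v)" using Suc.prems(2) by simp
      show "Ck_on k U (\<lambda>p. frechet_derivative f (at p) v)" using Suc.prems(1) by simp
    qed
    have eq: "frechet_derivative (\<lambda>q. pr (f q) (h q)) (at p) v = pr (f p) (frechet_derivative h (at p) v) + pr (frechet_derivative f (at p) v) (h p)"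
      if "p \<in> U" for p using hd[OF that] by (simp add: frechet_derivative_at[symmetric])
    show ?thesis by (rule Ck_on_transfer[OF assms(1) A eq])
  qed
  then show ?case using dif by simp
qed


section \<open>Smoothness closure\<close>

context
  fixes U :: "'a::euclidean_space set"
  assumes U: "open U"
begin

lemma sm_const: "smooth_on U (\<lambda>_. c)"
  unfolding smooth_on_def by (simp add: Ck_on_const)

lemma sm_add: "smooth_on U f \<Longrightarrow> smooth_on U h \<Longrightarrow> smooth_on U (\<lambda>q. f q + h q)"
  unfolding smooth_on_def using Ck_on_add[OF U] by blast

lemma sm_bil:
  fixes pr :: "'b::real_normed_vector \<Rightarrow> 'c::real_normed_vector \<Rightarrow> 'd::real_normed_vector"
    and f :: "'a \<Rightarrow> 'b" and h :: "'a \<Rightarrow> 'c"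
  assumes "bounded_bilinear pr" "smooth_on U f" "smooth_on U h"
  shows "smooth_on U (\<lambda>q. pr (f q) (h q))"
  using assms Ck_on_bilinear[OF U assms(1)] unfolding smooth_on_def by blast

lemma sm_mult: "smooth_on U (f::'a\<Rightarrow>real) \<Longrightarrow> smooth_on U h \<Longrightarrow> smooth_on U (\<lambda>q. f q * h q)"
  using sm_bil[OF bounded_bilinear_mult] by blast

lemma sm_scaleR: "smooth_on U (f::'a\<Rightarrow>real) \<Longrightarrow> smooth_on U (h::'a \<Rightarrow> 'b::real_normed_vector) \<Longrightarrow> smooth_on U (\<lambda>q. f q *\<^sub>R h q)"
  using sm_bil[OF bounded_bilinear_scaleR] by blast

lemma sm_inner: "smooth_on U (f::'a\<Rightarrow>'b::real_inner) \<Longrightarrow> smooth_on U h \<Longrightarrow> smooth_on U (\<lambda>q. f q \<bullet> h q)"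
  using sm_bil[OF bounded_bilinear_inner] by blast

lemma sm_neg: "smooth_on U (f::'a\<Rightarrow>'b::real_normed_vector) \<Longrightarrow> smooth_on U (\<lambda>q. - f q)"
  using sm_scaleR[OF sm_const[of "-1"], of f] by simp

lemma sm_diff: "smooth_on U (f::'a\<Rightarrow>'b::real_normed_vector) \<Longrightarrow> smooth_on U h \<Longrightarrow> smooth_on U (\<lambda>q. f q - h q)"
  using sm_add[OF _ sm_neg, of f h] by simp

lemma sm_sum: "finite I \<Longrightarrow> (\<And>i. i \<in> I \<Longrightarrow> smooth_on U (f i :: 'a \<Rightarrow> 'b::real_normed_vector)) \<Longrightarrow>
   smooth_on U (\<lambda>q. \<Sum>i\<in>I. f i q)"
proof (induction I rule: finite_induct)
  case empty then show ?case by (simp add: sm_const)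
next
  case (insert a I)
  then show ?case by (simp add: sm_add)
qed

lemma sm_transfer: "smooth_on U h \<Longrightarrow> (\<And>q. q \<in> U \<Longrightarrow> f q = h q) \<Longrightarrow> smooth_on U f"
  unfolding smooth_on_def using Ck_on_transfer[OF U] by blast

lemma sm_diffable: "smooth_on U f \<Longrightarrow> p \<in> U \<Longrightarrow> f differentiable (at p)"
  unfolding smooth_on_def by (metis Ck_on.simps(2))

end

section \<open>Lie brackets and directional derivatives\<close>

lemma fdw: "f differentiable (at p) \<Longrightarrow> (f has_derivative frechet_derivative f (at p)) (at p)"
  using frechet_derivative_works by blast

lemma fd_lin: "f differentiable (at p) \<Longrightarrow> linear (frechet_derivative f (at p))"
  by (rule linear_frechet_derivative)

lemma lb_antisym: "lie_bracket X Y p = - lie_bracket Y X p"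
  unfolding lie_bracket_def by simp

lemma lb_self[simp]: "lie_bracket X X p = 0"
  unfolding lie_bracket_def by simp

lemma lb_cong1: "open U \<Longrightarrow> p \<in> U \<Longrightarrow> (\<And>q. q \<in> U \<Longrightarrow> X q = X' q) \<Longrightarrow> lie_bracket X Y p = lie_bracket X' Y p"
  unfolding lie_bracket_def using fd_cong[of U p X X'] by simp

lemma lb_cong2: "open U \<Longrightarrow> p \<in> U \<Longrightarrow> (\<And>q. q \<in> U \<Longrightarrow> Y q = Y' q) \<Longrightarrow> lie_bracket X Y p = lie_bracket X Y' p"
  unfolding lie_bracket_def using fd_cong[of U p Y Y'] by simp

lemma fd_add: "f differentiable (at p) \<Longrightarrow> h differentiable (at p) \<Longrightarrow>
  frechet_derivative (\<lambda>q. f q + h q) (at p) v = frechet_derivative f (at p) v + frechet_derivative h (at p) v"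
proof -
  assume a: "f differentiable (at p)" "h differentiable (at p)"
  have "((\<lambda>q. f q + h q) has_derivative (\<lambda>v. frechet_derivative f (at p) v + frechet_derivative h (at p) v)) (at p)"
    using fdw[OF a(1)] fdw[OF a(2)] by (rule has_derivative_add)
  then show ?thesis by (simp add: frechet_derivative_at[symmetric])
qed

lemma fd_neg: "f differentiable (at p) \<Longrightarrow>
  frechet_derivative (\<lambda>q. - f q) (at p) v = - frechet_derivative f (at p) v"
proof -
  assume a: "f differentiable (at p)"
  have "((\<lambda>q. - f q) has_derivative (\<lambda>v. - frechet_derivative f (at p) v)) (at p)"
    using fdw[OF a(1)] by (rule has_derivative_minus)
  then show ?thesis by (simp add: frechet_derivative_at[symmetric])
qed

lemma fd_scaleR: "(f::_\<Rightarrow>real) differentiable (at p) \<Longrightarrow> h differentiable (at p) \<Longrightarrow>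
  frechet_derivative (\<lambda>q. f q *\<^sub>R h q) (at p) v = f p *\<^sub>R frechet_derivative h (at p) v + frechet_derivative f (at p) v *\<^sub>R h p"
proof -
  assume a: "f differentiable (at p)" "h differentiable (at p)"
  have "((\<lambda>q. f q *\<^sub>R h q) has_derivative (\<lambda>v. f p *\<^sub>R frechet_derivative h (at p) v + frechet_derivative f (at p) v *\<^sub>R h p)) (at p)"
    using fdw[OF a(1)] fdw[OF a(2)] by (rule has_derivative_scaleR)
  then show ?thesis by (simp add: frechet_derivative_at[symmetric])
qed

lemma fd_mult: "(f::_\<Rightarrow>real) differentiable (at p) \<Longrightarrow> h differentiable (at p) \<Longrightarrow>
  frechet_derivative (\<lambda>q. f q * h q) (at p) v = f p * frechet_derivative h (at p) v + frechet_derivative f (at p) v * h p"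
  using fd_scaleR[of f p h v] by simp

lemma lb_add1:
  assumes "X1 differentiable (at p)" "X2 differentiable (at p)" "Y differentiable (at p)"
  shows "lie_bracket (\<lambda>q. X1 q + X2 q) Y p = lie_bracket X1 Y p + lie_bracket X2 Y p"
  unfolding lie_bracket_def using assms
  by (simp add: fd_add linear_add[OF fd_lin[OF assms(3)]])

lemma lb_scale1:
  assumes "f differentiable (at p)" "X differentiable (at p)" "Y differentiable (at p)"
  shows "lie_bracket (\<lambda>q. f q *\<^sub>R X q) Y p = f p *\<^sub>R lie_bracket X Y p - frechet_derivative f (at p) (Y p) *\<^sub>R X p"
  unfolding lie_bracket_def using assms
  by (simp add: fd_scaleR linear_scale[OF fd_lin[OF assms(3)]] algebra_simps)

lemma lb_neg1:
  assumes "X differentiable (at p)" "Y differentiable (at p)"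
  shows "lie_bracket (\<lambda>q. - X q) Y p = - lie_bracket X Y p"
  unfolding lie_bracket_def using assms
  by (simp add: fd_neg linear_neg[OF fd_lin[OF assms(2)]])

lemma lb_neg2:
  assumes "X differentiable (at p)" "Y differentiable (at p)"
  shows "lie_bracket X (\<lambda>q. - Y q) p = - lie_bracket X Y p"
  using lb_neg1[OF assms(2,1)] lb_antisym by metis

lemma vf_cong: "open U \<Longrightarrow> p \<in> U \<Longrightarrow> (\<And>q. q \<in> U \<Longrightarrow> f q = h q) \<Longrightarrow> vf_apply X f p = vf_apply X h p"
  unfolding vf_apply_def using fd_cong[of U p f h] by simp

lemma vf_const: "open U \<Longrightarrow> p \<in> U \<Longrightarrow> (\<And>q. q \<in> U \<Longrightarrow> f q = c) \<Longrightarrow> vf_apply X f p = 0"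
  using vf_cong[of U p f "\<lambda>_. c" X] unfolding vf_apply_def by simp

lemma vf_addX: "f differentiable (at p) \<Longrightarrow> vf_apply (\<lambda>q. X1 q + X2 q) f p = vf_apply X1 f p + vf_apply X2 f p"
  unfolding vf_apply_def by (simp add: linear_add[OF fd_lin])

lemma vf_scaleX: "f differentiable (at p) \<Longrightarrow> vf_apply (\<lambda>q. c q *\<^sub>R X q) f p = c p * vf_apply X f p"
  unfolding vf_apply_def by (simp add: linear_scale[OF fd_lin])

lemma vf_add: "f differentiable (at p) \<Longrightarrow> h differentiable (at p) \<Longrightarrow> vf_apply X (\<lambda>q. f q + h q) p = vf_apply X f p + vf_apply X h p"
  unfolding vf_apply_def by (simp add: fd_add)

lemma vf_neg: "f differentiable (at p) \<Longrightarrow> vf_apply X (\<lambda>q. - f q) p = - vf_apply X f p"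
  unfolding vf_apply_def by (simp add: fd_neg)

lemma vf_mult: "f differentiable (at p) \<Longrightarrow> h differentiable (at p) \<Longrightarrow> vf_apply X (\<lambda>q. f q * h q) p = f p * vf_apply X h p + vf_apply X f p * h p"
  unfolding vf_apply_def by (simp add: fd_mult)

section \<open>Tensoriality\<close>

lemma tensorial:
  fixes T :: "('a::euclidean_space \<Rightarrow> 'a) \<Rightarrow> 'v::real_vector"
  assumes U: "open U"
    and cong: "\<And>X X'. (\<And>q. q \<in> U \<Longrightarrow> X q = X' q) \<Longrightarrow> T X = T X'"
    and add: "\<And>X1 X2. smooth_on U X1 \<Longrightarrow> smooth_on U X2 \<Longrightarrow> T (\<lambda>q. X1 q + X2 q) = T X1 + T X2"
    and scale: "\<And>f X. smooth_on U f \<Longrightarrow> smooth_on U X \<Longrightarrow> T (\<lambda>q. f q *\<^sub>R X q) = f p *\<^sub>R T X"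
  shows "finite I \<Longrightarrow> (\<And>a. a \<in> I \<Longrightarrow> smooth_on U (c a)) \<Longrightarrow> (\<And>a. a \<in> I \<Longrightarrow> smooth_on U (e a)) \<Longrightarrow>
     T (\<lambda>q. \<Sum>a\<in>I. c a q *\<^sub>R e a q) = (\<Sum>a\<in>I. c a p *\<^sub>R T (e a))"
proof (induction I rule: finite_induct)
  case empty
  have "T (\<lambda>q. (\<lambda>_. 0::real) q *\<^sub>R (\<lambda>_. 0::'a) q) = (\<lambda>_. 0::real) p *\<^sub>R T (\<lambda>_. 0)"
    by (rule scale) (simp_all add: sm_const[OF U])
  then show ?case by simp
next
  case (insert a I)
  have s1: "smooth_on U (\<lambda>q. c a q *\<^sub>R e a q)" using insert.prems by (simp add: sm_scaleR[OF U])
  have s2: "smooth_on U (\<lambda>q. \<Sum>a\<in>I. c a q *\<^sub>R e a q)"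
    using insert by (intro sm_sum[OF U]) (simp_all add: sm_scaleR[OF U])
  have "T (\<lambda>q. \<Sum>a\<in>insert a I. c a q *\<^sub>R e a q) = T (\<lambda>q. c a q *\<^sub>R e a q + (\<Sum>a\<in>I. c a q *\<^sub>R e a q))"
    using insert.hyps by simp
  also have "\<dots> = T (\<lambda>q. c a q *\<^sub>R e a q) + T (\<lambda>q. \<Sum>a\<in>I. c a q *\<^sub>R e a q)"
    by (rule add[OF s1 s2])
  also have "\<dots> = c a p *\<^sub>R T (e a) + (\<Sum>a\<in>I. c a p *\<^sub>R T (e a))"
    using insert by (simp add: scale)
  finally show ?case using insert.hyps by simp
qed




locale kframe =
  fixes U :: "'a::euclidean_space set"
    and g :: "'a \<Rightarrow> 'a \<Rightarrow> 'a \<Rightarrow> real"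
    and J :: "'a \<Rightarrow> 'a \<Rightarrow> 'a"
    and n :: nat
    and k t :: "'a \<Rightarrow> 'a"
    and x y :: "nat \<Rightarrow> 'a \<Rightarrow> 'a"
    and A B C D E F G H N :: "nat \<Rightarrow> 'a \<Rightarrow> real"
    and L :: "'a \<Rightarrow> real"
  assumes n: "n \<ge> 1"
    and dim: "DIM('a) = 2 * n + 2"
    and U_open: "open U"
    and metric: "riemannian_metric U g"
    and smooth_k: "smooth_vector_field U k"
    and smooth_t: "smooth_vector_field U t"
    and smooth_x: "\<And>i. i \<in> {1..n} \<Longrightarrow> smooth_vector_field U (x i)"
    and smooth_y: "\<And>i. i \<in> {1..n} \<Longrightarrow> smooth_vector_field U (y i)"
    and smooth_coeffs: "\<And>i. i \<in> {1..n} \<Longrightarrow>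
          smooth_on U (A i) \<and> smooth_on U (B i) \<and> smooth_on U (C i) \<and> smooth_on U (D i) \<and>
          smooth_on U (E i) \<and> smooth_on U (F i) \<and> smooth_on U (G i) \<and> smooth_on U (H i) \<and>
          smooth_on U (N i)"
    and smooth_L: "smooth_on U L"
    and on_kk: "\<And>p. p \<in> U \<Longrightarrow> g p (k p) (k p) = 1"
    and on_tt: "\<And>p. p \<in> U \<Longrightarrow> g p (t p) (t p) = 1"
    and on_kt: "\<And>p. p \<in> U \<Longrightarrow> g p (k p) (t p) = 0"
    and on_kx: "\<And>p i. p \<in> U \<Longrightarrow> i \<in> {1..n} \<Longrightarrow> g p (k p) (x i p) = 0"
    and on_ky: "\<And>p i. p \<in> U \<Longrightarrow> i \<in> {1..n} \<Longrightarrow> g p (k p) (y i p) = 0"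
    and on_tx: "\<And>p i. p \<in> U \<Longrightarrow> i \<in> {1..n} \<Longrightarrow> g p (t p) (x i p) = 0"
    and on_ty: "\<And>p i. p \<in> U \<Longrightarrow> i \<in> {1..n} \<Longrightarrow> g p (t p) (y i p) = 0"
    and on_xx: "\<And>p i j. p \<in> U \<Longrightarrow> i \<in> {1..n} \<Longrightarrow> j \<in> {1..n} \<Longrightarrow>
                  g p (x i p) (x j p) = (if i = j then 1 else 0)"
    and on_yy: "\<And>p i j. p \<in> U \<Longrightarrow> i \<in> {1..n} \<Longrightarrow> j \<in> {1..n} \<Longrightarrow>
                  g p (y i p) (y j p) = (if i = j then 1 else 0)"
    and on_xy: "\<And>p i j. p \<in> U \<Longrightarrow> i \<in> {1..n} \<Longrightarrow> j \<in> {1..n} \<Longrightarrow>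
                  g p (x i p) (y j p) = 0"
    and br_xx: "\<And>p i j. p \<in> U \<Longrightarrow> i \<in> {1..n} \<Longrightarrow> j \<in> {1..n} \<Longrightarrow> i \<noteq> j \<Longrightarrow>
                  lie_bracket (x i) (x j) p = 0"
    and br_xy: "\<And>p i j. p \<in> U \<Longrightarrow> i \<in> {1..n} \<Longrightarrow> j \<in> {1..n} \<Longrightarrow> i \<noteq> j \<Longrightarrow>
                  lie_bracket (x i) (y j) p = 0"
    and br_yy: "\<And>p i j. p \<in> U \<Longrightarrow> i \<in> {1..n} \<Longrightarrow> j \<in> {1..n} \<Longrightarrow> i \<noteq> j \<Longrightarrow>
                  lie_bracket (y i) (y j) p = 0"
    and br_kt: "\<And>p. p \<in> U \<Longrightarrow> lie_bracket k t p = L p *\<^sub>R (k p + t p)"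
    and br_xiyi: "\<And>p i. p \<in> U \<Longrightarrow> i \<in> {1..n} \<Longrightarrow>
                  lie_bracket (x i) (y i) p = N i p *\<^sub>R (k p + t p)"
    and br_kx: "\<And>p i. p \<in> U \<Longrightarrow> i \<in> {1..n} \<Longrightarrow>
                  lie_bracket k (x i) p = A i p *\<^sub>R x i p + B i p *\<^sub>R y i p"
    and br_ky: "\<And>p i. p \<in> U \<Longrightarrow> i \<in> {1..n} \<Longrightarrow>
                  lie_bracket k (y i) p = C i p *\<^sub>R x i p + D i p *\<^sub>R y i p"
    and br_tx: "\<And>p i. p \<in> U \<Longrightarrow> i \<in> {1..n} \<Longrightarrow>
                  lie_bracket t (x i) p = E i p *\<^sub>R x i p + F i p *\<^sub>R y i p"
    and br_ty: "\<And>p i. p \<in> U \<Longrightarrow> i \<in> {1..n} \<Longrightarrow>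
                  lie_bracket t (y i) p = G i p *\<^sub>R x i p + H i p *\<^sub>R y i p"
    and rel1: "\<And>p i. p \<in> U \<Longrightarrow> i \<in> {1..n} \<Longrightarrow> A i p - D i p = F i p + G i p"
    and rel2: "\<And>p i. p \<in> U \<Longrightarrow> i \<in> {1..n} \<Longrightarrow> B i p + C i p = H i p - E i p"
    and rel3: "\<And>p i. p \<in> U \<Longrightarrow> i \<in> {1..n} \<Longrightarrow> N i p = A i p + D i p"
    and rel4: "\<And>p i. p \<in> U \<Longrightarrow> i \<in> {1..n} \<Longrightarrow> N i p = - (E i p + H i p)"
    and J_lin: "\<And>p. p \<in> U \<Longrightarrow> linear (J p)"
    and J_k: "\<And>p. p \<in> U \<Longrightarrow> J p (k p) = t p"
    and J_t: "\<And>p. p \<in> U \<Longrightarrow> J p (t p) = - k p"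
    and J_x: "\<And>p i. p \<in> U \<Longrightarrow> i \<in> {1..n} \<Longrightarrow> J p (x i p) = y i p"
    and J_y: "\<And>p i. p \<in> U \<Longrightarrow> i \<in> {1..n} \<Longrightarrow> J p (y i p) = - x i p"

begin

definition e :: "nat \<Rightarrow> 'a \<Rightarrow> 'a" where
  "e a = (if a = 0 then k else if a = 1 then t else if even a then x (a div 2) else y (a div 2))"

definition Idx :: "nat set" where "Idx = {..<2*n+2}"

lemma fin_Idx[simp]: "finite Idx" by (simp add: Idx_def)
lemma card_Idx: "card Idx = 2*n+2" by (simp add: Idx_def)

lemma g_bil: "q \<in> U \<Longrightarrow> bilinear (g q)"
  using metric unfolding riemannian_metric_def by blast

lemma g_sym: "q \<in> U \<Longrightarrow> g q v w = g q w v"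
  using metric unfolding riemannian_metric_def by blast

lemma g_pos: "q \<in> U \<Longrightarrow> v \<noteq> 0 \<Longrightarrow> g q v v > 0"
  using metric unfolding riemannian_metric_def by blast

lemma g_sm: "smooth_on U (\<lambda>q. g q v w)"
  using metric unfolding riemannian_metric_def by blast

lemma e_cases:
  assumes "a \<in> Idx"
  obtains "a = 0" "e a = k" | "a = 1" "e a = t" | i where "i \<in> {1..n}" "a = 2*i" "e a = x i"
    | i where "i \<in> {1..n}" "a = 2*i+1" "e a = y i"
proof -
  have aI: "a < 2*n+2" using assms by (simp add: Idx_def)
  consider "a = 0" | "a = 1" | "a \<ge> 2" "even a" | "a \<ge> 2" "odd a" by linarith
  then show ?thesis
  proof cases
    case 1 then show ?thesis using that(1) by (simp add: e_def)
  next
    case 2 then show ?thesis using that(2) by (simp add: e_def)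
  next
    case 3
    then have "a div 2 \<in> {1..n}" "a = 2 * (a div 2)" using aI by auto
    then show ?thesis using that(3) 3 by (simp add: e_def)
  next
    case 4
    then have "a div 2 \<in> {1..n}" "a = 2 * (a div 2) + 1" using aI by auto
    then show ?thesis using that(4) 4 by (simp add: e_def)
  qed
qed

lemma e_k: "e 0 = k" and e_t: "e 1 = t" and e_x: "e (2*i) = x i" if "i \<ge> 1"
  and e_y: "e (2*i+1) = y i"
  using that by (auto simp: e_def)

lemma e_sm: "a \<in> Idx \<Longrightarrow> smooth_on U (e a)"
  by (erule e_cases) (use smooth_k smooth_t smooth_x smooth_y in \<open>auto simp: smooth_vector_field_def\<close>)

lemma par_neq[simp]: "(2*i::nat) \<noteq> Suc (2*j)" "Suc (2*j) \<noteq> 2*i"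
  by presburger+

lemma e_orth:
  assumes q: "q \<in> U" and a: "a \<in> Idx" and b: "b \<in> Idx"
  shows "g q (e a q) (e b q) = (if a = b then 1 else 0)"
  using a
proof (cases rule: e_cases)
  case 1
  from b show ?thesis
    by (cases rule: e_cases) (use 1 q on_kk on_kt on_kx on_ky in auto)
next
  case 2
  from b show ?thesis
    by (cases rule: e_cases) (use 2 q on_tt on_kt on_tx on_ty g_sym in auto)
next
  case (3 i)
  from b show ?thesis
    by (cases rule: e_cases) (use 3 q on_xx on_xy on_kx on_tx g_sym in auto)
next
  case (4 i)
  from b show ?thesis
    by (cases rule: e_cases) (use 4 q on_yy on_xy on_ky on_ty g_sym in auto)
qed

lemma g_lin1: "q \<in> U \<Longrightarrow> linear (\<lambda>v. g q v w)"
  using g_bil unfolding bilinear_def by blast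
lemma g_lin2: "q \<in> U \<Longrightarrow> linear (\<lambda>w. g q v w)"
  using g_bil unfolding bilinear_def by blast

lemma g_sum_coef:
  assumes q: "q \<in> U" and b: "b \<in> Idx"
  shows "g q (\<Sum>a\<in>Idx. c a *\<^sub>R e a q) (e b q) = c b"
proof -
  have "g q (\<Sum>a\<in>Idx. c a *\<^sub>R e a q) (e b q) = (\<Sum>a\<in>Idx. c a * g q (e a q) (e b q))"
    using linear_sum[OF g_lin1[OF q, of "e b q"], of "\<lambda>a. c a *\<^sub>R e a q" Idx]
      linear_scale[OF g_lin1[OF q, of "e b q"]] by simp
  also have "\<dots> = (\<Sum>a\<in>Idx. if a = b then c a else 0)"
    using e_orth[OF q _ b] by (intro sum.cong) auto
  also have "\<dots> = c b" using b by simp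
  finally show ?thesis .
qed

lemma expand:
  assumes q: "q \<in> U"
  shows "v = (\<Sum>a\<in>Idx. g q v (e a q) *\<^sub>R e a q)"
proof -
  define E where "E = (\<lambda>a. e a q)"
  have inj: "inj_on E Idx"
  proof (rule inj_onI)
    fix a b assume ab: "a \<in> Idx" "b \<in> Idx" "E a = E b"
    show "a = b"
    proof (rule ccontr)
      assume "a \<noteq> b"
      then have "g q (E a) (E b) = 0" using e_orth[OF q ab(1,2)] unfolding E_def by simp
      moreover have "g q (E a) (E a) = 1" using e_orth[OF q ab(1,1)] unfolding E_def by simp
      ultimately show False using ab(3) by simp
    qed
  qed
  define B where "B = E ` Idx"
  have finB: "finite B" unfolding B_def by simp
  have cardB: "card B = 2*n+2" unfolding B_def using card_image[OF inj] card_Idx by simp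
  have reidx: "(\<Sum>w\<in>B. u w *\<^sub>R w) = (\<Sum>a\<in>Idx. u (E a) *\<^sub>R E a)" for u :: "'a \<Rightarrow> real"
    unfolding B_def using sum.reindex[OF inj, of "\<lambda>w. u w *\<^sub>R w"] by simp
  have indep: "independent B"
  proof
    assume "dependent B"
    then obtain u where u: "\<exists>w\<in>B. u w \<noteq> 0" "(\<Sum>w\<in>B. u w *\<^sub>R w) = 0"
      using dependent_finite[OF finB] by blast
    from u(1) obtain b where b: "b \<in> Idx" "u (E b) \<noteq> 0" unfolding B_def by blast
    have "g q (\<Sum>a\<in>Idx. u (E a) *\<^sub>R e a q) (e b q) = u (E b)"
      using g_sum_coef[OF q b(1)] .
    moreover have "(\<Sum>a\<in>Idx. u (E a) *\<^sub>R e a q) = 0" using u(2) reidx unfolding E_def by simp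
    ultimately have "u (E b) = 0" using linear_0[OF g_lin1[OF q, of "e b q"]] by simp
    then show False using b by simp
  qed
  have "UNIV \<subseteq> span B"
    by (rule card_ge_dim_independent) (use indep cardB dim in auto)
  then have "v \<in> span B" by blast
  then obtain u where u: "v = (\<Sum>w\<in>B. u w *\<^sub>R w)" using span_finite[OF finB] by blast
  then have v2: "v = (\<Sum>a\<in>Idx. u (E a) *\<^sub>R e a q)" using reidx unfolding E_def by simp
  have "g q v (e b q) = u (E b)" if "b \<in> Idx" for b
    using g_sum_coef[OF q that] v2 by simp
  then show ?thesis using v2 by simp
qed

lemma g_expand_left:
  assumes q: "q \<in> U"
  shows "g q v w = (\<Sum>a\<in>Idx. g q v (e a q) * g q (e a q) w)"
proof -
  have "g q v w = g q (\<Sum>a\<in>Idx. g q v (e a q) *\<^sub>R e a q) w" using expand[OF q, of v] by simp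
  also have "\<dots> = (\<Sum>a\<in>Idx. g q v (e a q) * g q (e a q) w)"
    using linear_sum[OF g_lin1[OF q, of w], of "\<lambda>a. g q v (e a q) *\<^sub>R e a q" Idx]
      linear_scale[OF g_lin1[OF q, of w]] by simp
  finally show ?thesis .
qed

lemma parseval:
  assumes q: "q \<in> U"
  shows "g q v w = (\<Sum>a\<in>Idx. g q v (e a q) * g q w (e a q))"
  using g_expand_left[OF q, of v w] g_sym[OF q] by simp

lemma eq_by_coef:
  assumes q: "q \<in> U" and "\<And>a. a \<in> Idx \<Longrightarrow> g q u (e a q) = g q v (e a q)"
  shows "u = v"
  using expand[OF q, of u] expand[OF q, of v] assms(2) by (metis (no_types, lifting) sum.cong)

definition pt :: "nat \<Rightarrow> nat" where "pt a = (if even a then a + 1 else a - 1)"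
definition sg :: "nat \<Rightarrow> real" where "sg a = (if even a then 1 else -1)"

lemma pt_Idx: "a \<in> Idx \<Longrightarrow> pt a \<in> Idx"
  unfolding pt_def Idx_def by auto presburger

lemma pt_pt[simp]: "pt (pt a) = a"
  unfolding pt_def by auto

lemma sg_pt: "sg (pt a) = - sg a"
  unfolding pt_def sg_def by auto

lemma sg_sq: "sg a * sg a = 1"
  unfolding sg_def by auto

lemma J_lin_rules:
  assumes "q \<in> U"
  shows "J q (u + v) = J q u + J q v" "J q (c *\<^sub>R u) = c *\<^sub>R J q u" "J q (- u) = - J q u"
    "J q (u - v) = J q u - J q v" "J q 0 = 0" "J q (sum f S) = (\<Sum>a\<in>S. J q (f a))"
  using J_lin[OF assms] by (simp_all add: linear_add linear_scale linear_neg linear_diff linear_0 linear_sum)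

lemma Je:
  assumes q: "q \<in> U" and a: "a \<in> Idx"
  shows "J q (e a q) = sg a *\<^sub>R e (pt a) q"
  using a
proof (cases rule: e_cases)
  case 1 then show ?thesis using q J_k by (simp add: pt_def sg_def e_def)
next
  case 2 then show ?thesis using q J_t by (simp add: pt_def sg_def e_def)
next
  case (3 i) then show ?thesis using q J_x[OF q 3(1)] by (simp add: pt_def sg_def e_def)
next
  case (4 i) then show ?thesis using q J_y[OF q 4(1)] by (simp add: pt_def sg_def e_def)
qed

lemma J_coef:
  assumes q: "q \<in> U" and b: "b \<in> Idx"
  shows "g q (J q v) (e b q) = sg (pt b) * g q v (e (pt b) q)"
proof -
  have "J q v = J q (\<Sum>a\<in>Idx. g q v (e a q) *\<^sub>R e a q)" using expand[OF q, of v] by simp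
  also have "\<dots> = (\<Sum>a\<in>Idx. (g q v (e a q) * sg a) *\<^sub>R e (pt a) q)"
  proof -
    have "J q (\<Sum>a\<in>Idx. g q v (e a q) *\<^sub>R e a q) = (\<Sum>a\<in>Idx. J q (g q v (e a q) *\<^sub>R e a q))"
      by (rule J_lin_rules(6)[OF q])
    also have "\<dots> = (\<Sum>a\<in>Idx. (g q v (e a q) * sg a) *\<^sub>R e (pt a) q)"
      using J_lin_rules(2)[OF q] Je[OF q] by (intro sum.cong refl) simp
    finally show ?thesis .
  qed
  finally have Jv: "J q v = (\<Sum>a\<in>Idx. (g q v (e a q) * sg a) *\<^sub>R e (pt a) q)" .
  have "g q (J q v) (e b q) = (\<Sum>a\<in>Idx. (g q v (e a q) * sg a) * g q (e (pt a) q) (e b q))"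
    unfolding Jv
    using linear_sum[OF g_lin1[OF q, of "e b q"], of "\<lambda>a. (g q v (e a q) * sg a) *\<^sub>R e (pt a) q" Idx]
      linear_scale[OF g_lin1[OF q, of "e b q"]] by simp
  also have "\<dots> = (\<Sum>a\<in>Idx. if a = pt b then g q v (e a q) * sg a else 0)"
  proof (intro sum.cong refl)
    fix a assume a: "a \<in> Idx"
    have "(pt a = b) = (a = pt b)" by (metis pt_pt)
    then show "(g q v (e a q) * sg a) * g q (e (pt a) q) (e b q) = (if a = pt b then g q v (e a q) * sg a else 0)"
      using e_orth[OF q pt_Idx[OF a] b] by simp
  qed
  also have "\<dots> = sg (pt b) * g q v (e (pt b) q)" using pt_Idx[OF b] by simp
  finally show ?thesis .
qed

lemma JJ:
  assumes q: "q \<in> U"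
  shows "J q (J q v) = - v"
proof (rule eq_by_coef[OF q])
  fix a assume a: "a \<in> Idx"
  have "g q (J q (J q v)) (e a q) = sg (pt a) * (sg (pt (pt a)) * g q v (e (pt (pt a)) q))"
    using J_coef[OF q a] J_coef[OF q pt_Idx[OF a]] by simp
  also have "\<dots> = - g q v (e a q)" using sg_pt[of a] sg_sq[of a] by simp
  also have "\<dots> = g q (- v) (e a q)" using linear_neg[OF g_lin1[OF q]] by simp
  finally show "g q (J q (J q v)) (e a q) = g q (- v) (e a q)" .
qed

lemma compat:
  assumes q: "q \<in> U"
  shows "g q (J q v) (J q w) = g q v w"
proof -
  have "g q (J q v) (J q w) = (\<Sum>a\<in>Idx. sg (pt a) * g q v (e (pt a) q) * (sg (pt a) * g q w (e (pt a) q)))"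
    using parseval[OF q, of "J q v" "J q w"] J_coef[OF q] by (simp add: mult.assoc)
  also have "\<dots> = (\<Sum>a\<in>Idx. g q v (e (pt a) q) * g q w (e (pt a) q))"
    using sg_sq by (intro sum.cong refl) (simp add: algebra_simps)
  also have "\<dots> = (\<Sum>a\<in>pt ` Idx. g q v (e a q) * g q w (e a q))"
  proof -
    have "inj_on pt Idx" by (metis inj_onI pt_pt)
    then show ?thesis by (simp add: sum.reindex)
  qed
  also have "pt ` Idx = Idx"
  proof
    show "pt ` Idx \<subseteq> Idx" using pt_Idx by blast
    show "Idx \<subseteq> pt ` Idx" using pt_Idx by (metis image_eqI pt_pt subsetI)
  qed
  finally show ?thesis using parseval[OF q, of v w] by simp
qed

lemma gcomp_sm:
  assumes X: "smooth_on U X" and Y: "smooth_on U Y"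
  shows "smooth_on U (\<lambda>q. g q (X q) (Y q))"
proof (rule sm_transfer[OF U_open])
  let ?F = "\<lambda>q. \<Sum>ij\<in>Basis \<times> Basis. ((X q \<bullet> fst ij) * (Y q \<bullet> snd ij)) * g q (fst ij) (snd ij)"
  show "smooth_on U ?F"
    by (intro sm_sum[OF U_open] finite_SigmaI finite_Basis sm_mult[OF U_open] sm_inner[OF U_open] X Y sm_const[OF U_open] g_sm)
  fix q assume q: "q \<in> U"
  have "g q (X q) (Y q) = g q (\<Sum>i\<in>Basis. (X q \<bullet> i) *\<^sub>R i) (\<Sum>j\<in>Basis. (Y q \<bullet> j) *\<^sub>R j)"
    by (simp add: euclidean_representation)
  also have "\<dots> = (\<Sum>(i,j)\<in>Basis \<times> Basis. g q ((X q \<bullet> i) *\<^sub>R i) ((Y q \<bullet> j) *\<^sub>R j))"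
    by (rule bilinear_sum[OF g_bil[OF q]])
  also have "\<dots> = ?F q"
    by (intro sum.cong refl) (auto simp: bilinear_lmul[OF g_bil[OF q]] bilinear_rmul[OF g_bil[OF q]])
  finally show "g q (X q) (Y q) = ?F q" .
qed

lemma Jcomp_eq:
  assumes q: "q \<in> U"
  shows "J q (X q) = (\<Sum>a\<in>Idx. (g q (X q) (e a q) * sg a) *\<^sub>R e (pt a) q)"
proof -
  have "J q (X q) = J q (\<Sum>a\<in>Idx. g q (X q) (e a q) *\<^sub>R e a q)" using expand[OF q, of "X q"] by simp
  also have "\<dots> = (\<Sum>a\<in>Idx. J q (g q (X q) (e a q) *\<^sub>R e a q))"
    by (rule J_lin_rules(6)[OF q])
  also have "\<dots> = (\<Sum>a\<in>Idx. (g q (X q) (e a q) * sg a) *\<^sub>R e (pt a) q)"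
    using J_lin_rules(2)[OF q] Je[OF q] by (intro sum.cong refl) simp
  finally show ?thesis .
qed

lemma Jcomp_sm:
  assumes X: "smooth_on U X"
  shows "smooth_on U (acs_apply J X)"
proof (rule sm_transfer[OF U_open])
  show "smooth_on U (\<lambda>q. \<Sum>a\<in>Idx. (g q (X q) (e a q) * sg a) *\<^sub>R e (pt a) q)"
    by (intro sm_sum[OF U_open] fin_Idx sm_scaleR[OF U_open] sm_mult[OF U_open] gcomp_sm X e_sm pt_Idx sm_const[OF U_open])
  show "acs_apply J X q = (\<Sum>a\<in>Idx. (g q (X q) (e a q) * sg a) *\<^sub>R e (pt a) q)" if "q \<in> U" for q
    unfolding acs_apply_def by (rule Jcomp_eq[OF that])
qed

lemma acs: "almost_complex_structure U J"
  unfolding almost_complex_structure_def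
proof (intro conjI ballI allI)
  fix p assume "p \<in> U"
  then show "linear (J p)" "\<And>v. J p (J p v) = - v" using J_lin JJ by auto
next
  fix v
  show "smooth_on U (\<lambda>p. J p v)"
    using Jcomp_sm[OF sm_const[OF U_open, of v]] unfolding acs_apply_def .
qed

lemma sm_diffable': "smooth_on U f \<Longrightarrow> p \<in> U \<Longrightarrow> f differentiable (at p)"
  using sm_diffable[OF U_open] .

lemma e_diff: "a \<in> Idx \<Longrightarrow> p \<in> U \<Longrightarrow> e a differentiable (at p)"
  using sm_diffable' e_sm by blast

lemma acs_e: "q \<in> U \<Longrightarrow> a \<in> Idx \<Longrightarrow> acs_apply J (e a) q = sg a *\<^sub>R e (pt a) q"
  unfolding acs_apply_def by (rule Je)

lemma lbJ1:
  assumes p: "p \<in> U" and a: "a \<in> Idx" and Y: "Y differentiable (at p)"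
  shows "lie_bracket (acs_apply J (e a)) Y p = sg a *\<^sub>R lie_bracket (e (pt a)) Y p"
proof -
  have "lie_bracket (acs_apply J (e a)) Y p = lie_bracket (\<lambda>q. (\<lambda>_. sg a) q *\<^sub>R e (pt a) q) Y p"
    by (rule lb_cong1[OF U_open p]) (simp add: acs_e a)
  also have "\<dots> = sg a *\<^sub>R lie_bracket (e (pt a)) Y p"
    by (subst lb_scale1) (simp_all add: Y e_diff pt_Idx a p)
  finally show ?thesis .
qed

lemma lbJ2:
  assumes p: "p \<in> U" and a: "a \<in> Idx" and Y: "Y differentiable (at p)"
  shows "lie_bracket Y (acs_apply J (e a)) p = sg a *\<^sub>R lie_bracket Y (e (pt a)) p"
proof -
  have "lie_bracket Y (acs_apply J (e a)) p = - lie_bracket (acs_apply J (e a)) Y p" by (rule lb_antisym)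
  also have "\<dots> = - (sg a *\<^sub>R lie_bracket (e (pt a)) Y p)" by (simp only: lbJ1[OF assms])
  also have "\<dots> = sg a *\<^sub>R (- lie_bracket (e (pt a)) Y p)" by simp
  also have "- lie_bracket (e (pt a)) Y p = lie_bracket Y (e (pt a)) p" by (rule lb_antisym[symmetric])
  finally show ?thesis .
qed

context
  fixes p assumes p: "p \<in> U"
begin

lemma kdif: "k differentiable (at p)" using smooth_k p sm_diffable' smooth_vector_field_def by blast
lemma tdif: "t differentiable (at p)" using smooth_t p sm_diffable' smooth_vector_field_def by blast
lemma xdif: "i \<in> {1..n} \<Longrightarrow> x i differentiable (at p)" using smooth_x p sm_diffable' smooth_vector_field_def by blast
lemma ydif: "i \<in> {1..n} \<Longrightarrow> y i differentiable (at p)" using smooth_y p sm_diffable' smooth_vector_field_def by blast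

lemma tab:
  assumes i: "i \<in> {1..n}" and j: "j \<in> {1..n}"
  shows
  "lie_bracket k t p = L p *\<^sub>R (k p + t p)"
  "lie_bracket t k p = - (L p *\<^sub>R (k p + t p))"
  "lie_bracket k (x i) p = A i p *\<^sub>R x i p + B i p *\<^sub>R y i p"
  "lie_bracket (x i) k p = - (A i p *\<^sub>R x i p + B i p *\<^sub>R y i p)"
  "lie_bracket k (y i) p = C i p *\<^sub>R x i p + D i p *\<^sub>R y i p"
  "lie_bracket (y i) k p = - (C i p *\<^sub>R x i p + D i p *\<^sub>R y i p)"
  "lie_bracket t (x i) p = E i p *\<^sub>R x i p + F i p *\<^sub>R y i p"
  "lie_bracket (x i) t p = - (E i p *\<^sub>R x i p + F i p *\<^sub>R y i p)"
  "lie_bracket t (y i) p = G i p *\<^sub>R x i p + H i p *\<^sub>R y i p"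
  "lie_bracket (y i) t p = - (G i p *\<^sub>R x i p + H i p *\<^sub>R y i p)"
  "lie_bracket (x i) (x j) p = 0"
  "lie_bracket (y i) (y j) p = 0"
  "lie_bracket (x i) (y j) p = (if i = j then N i p *\<^sub>R (k p + t p) else 0)"
  "lie_bracket (y j) (x i) p = (if i = j then - (N i p *\<^sub>R (k p + t p)) else 0)"
proof -
  show "lie_bracket k t p = L p *\<^sub>R (k p + t p)" by (rule br_kt[OF p])
  show "lie_bracket t k p = - (L p *\<^sub>R (k p + t p))" by (subst lb_antisym) (simp only: br_kt[OF p])
  show "lie_bracket k (x i) p = A i p *\<^sub>R x i p + B i p *\<^sub>R y i p" by (rule br_kx[OF p i])
  show "lie_bracket (x i) k p = - (A i p *\<^sub>R x i p + B i p *\<^sub>R y i p)" by (subst lb_antisym) (simp only: br_kx[OF p i])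
  show "lie_bracket k (y i) p = C i p *\<^sub>R x i p + D i p *\<^sub>R y i p" by (rule br_ky[OF p i])
  show "lie_bracket (y i) k p = - (C i p *\<^sub>R x i p + D i p *\<^sub>R y i p)" by (subst lb_antisym) (simp only: br_ky[OF p i])
  show "lie_bracket t (x i) p = E i p *\<^sub>R x i p + F i p *\<^sub>R y i p" by (rule br_tx[OF p i])
  show "lie_bracket (x i) t p = - (E i p *\<^sub>R x i p + F i p *\<^sub>R y i p)" by (subst lb_antisym) (simp only: br_tx[OF p i])
  show "lie_bracket t (y i) p = G i p *\<^sub>R x i p + H i p *\<^sub>R y i p" by (rule br_ty[OF p i])
  show "lie_bracket (y i) t p = - (G i p *\<^sub>R x i p + H i p *\<^sub>R y i p)" by (subst lb_antisym) (simp only: br_ty[OF p i])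
  show "lie_bracket (x i) (x j) p = 0"
  proof (cases "i = j")
    case True then show ?thesis by simp
  next
    case False then show ?thesis by (rule br_xx[OF p i j])
  qed
  show "lie_bracket (y i) (y j) p = 0"
  proof (cases "i = j")
    case True then show ?thesis by simp
  next
    case False then show ?thesis by (rule br_yy[OF p i j])
  qed
  show xy: "lie_bracket (x i) (y j) p = (if i = j then N i p *\<^sub>R (k p + t p) else 0)"
  proof (cases "i = j")
    case True then show ?thesis using br_xiyi[OF p i] by simp
  next
    case False then show ?thesis using br_xy[OF p i j False] by simp
  qed
  show "lie_bracket (y j) (x i) p = (if i = j then - (N i p *\<^sub>R (k p + t p)) else 0)"
    by (subst lb_antisym) (simp only: xy if_distrib[of uminus] neg_0_equal_iff_equal minus_zero)
qed

lemma tab0: "lie_bracket k t p = L p *\<^sub>R (k p + t p)" "lie_bracket t k p = - (L p *\<^sub>R (k p + t p))"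
  using n tab[of 1 1] by auto

lemma tab1: assumes i: "i \<in> {1..n}" shows
  "lie_bracket k (x i) p = A i p *\<^sub>R x i p + B i p *\<^sub>R y i p"
  "lie_bracket (x i) k p = - (A i p *\<^sub>R x i p + B i p *\<^sub>R y i p)"
  "lie_bracket k (y i) p = C i p *\<^sub>R x i p + D i p *\<^sub>R y i p"
  "lie_bracket (y i) k p = - (C i p *\<^sub>R x i p + D i p *\<^sub>R y i p)"
  "lie_bracket t (x i) p = E i p *\<^sub>R x i p + F i p *\<^sub>R y i p"
  "lie_bracket (x i) t p = - (E i p *\<^sub>R x i p + F i p *\<^sub>R y i p)"
  "lie_bracket t (y i) p = G i p *\<^sub>R x i p + H i p *\<^sub>R y i p"
  "lie_bracket (y i) t p = - (G i p *\<^sub>R x i p + H i p *\<^sub>R y i p)"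
  using tab[OF i i] by auto

lemmas tab2 = tab(11-14)

lemma N_core:
  assumes a: "a \<in> Idx" and b: "b \<in> Idx"
  shows "nijenhuis J (e a) (e b) p = 0"
proof -
  have Gs: "G i p = A i p - D i p - F i p" if "i \<in> {1..n}" for i using rel1[OF p that] by simp
  have Hs: "H i p = B i p + C i p + E i p" if "i \<in> {1..n}" for i using rel2[OF p that] by simp
  have da: "e a differentiable (at p)" "e (pt a) differentiable (at p)"
    using e_diff[OF a p] e_diff[OF pt_Idx[OF a] p] .
  have db: "e b differentiable (at p)" "e (pt b) differentiable (at p)"
    using e_diff[OF b p] e_diff[OF pt_Idx[OF b] p] .
  have dJb: "acs_apply J (e b) differentiable (at p)"
    using sm_diffable'[OF Jcomp_sm[OF e_sm[OF b]] p] .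
  have 1: "lie_bracket (acs_apply J (e a)) (acs_apply J (e b)) p = (sg a * sg b) *\<^sub>R lie_bracket (e (pt a)) (e (pt b)) p"
    by (simp add: lbJ1[OF p a dJb] lbJ2[OF p b da(2)])
  have 2: "lie_bracket (acs_apply J (e a)) (e b) p = sg a *\<^sub>R lie_bracket (e (pt a)) (e b) p"
    by (rule lbJ1[OF p a db(1)])
  have 3: "lie_bracket (e a) (acs_apply J (e b)) p = sg b *\<^sub>R lie_bracket (e a) (e (pt b)) p"
    by (rule lbJ2[OF p b da(1)])
  have "nijenhuis J (e a) (e b) p =
     (sg a * sg b) *\<^sub>R lie_bracket (e (pt a)) (e (pt b)) p
     - sg a *\<^sub>R J p (lie_bracket (e (pt a)) (e b) p)
     - sg b *\<^sub>R J p (lie_bracket (e a) (e (pt b)) p)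
     - lie_bracket (e a) (e b) p"
    unfolding nijenhuis_def 1 2 3 J_lin_rules(2)[OF p] ..
  also have "\<dots> = 0"
    using a
  proof (cases rule: e_cases)
    case 1
    note ca = this
    from b show ?thesis
    proof (cases rule: e_cases)
      case 1
      then show ?thesis using ca by (simp add: e_def pt_def sg_def J_lin_rules[OF p] J_k[OF p] J_t[OF p] J_x[OF p] J_y[OF p] tab0 tab1 tab2 Gs Hs algebra_simps)
    next
      case 2
      then show ?thesis using ca by (simp add: e_def pt_def sg_def J_lin_rules[OF p] J_k[OF p] J_t[OF p] J_x[OF p] J_y[OF p] tab0 tab1 tab2 Gs Hs algebra_simps)
    next
      case (3 j)
      then show ?thesis using ca by (simp add: e_def pt_def sg_def J_lin_rules[OF p] J_k[OF p] J_t[OF p] J_x[OF p] J_y[OF p] tab0 tab1 tab2 Gs Hs algebra_simps)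
    next
      case (4 j)
      then show ?thesis using ca by (simp add: e_def pt_def sg_def J_lin_rules[OF p] J_k[OF p] J_t[OF p] J_x[OF p] J_y[OF p] tab0 tab1 tab2 Gs Hs algebra_simps)
    qed
  next
    case 2
    note ca = this
    from b show ?thesis
    proof (cases rule: e_cases)
      case 1
      then show ?thesis using ca by (simp add: e_def pt_def sg_def J_lin_rules[OF p] J_k[OF p] J_t[OF p] J_x[OF p] J_y[OF p] tab0 tab1 tab2 Gs Hs algebra_simps)
    next
      case 2
      then show ?thesis using ca by (simp add: e_def pt_def sg_def J_lin_rules[OF p] J_k[OF p] J_t[OF p] J_x[OF p] J_y[OF p] tab0 tab1 tab2 Gs Hs algebra_simps)
    next
      case (3 j)
      then show ?thesis using ca by (simp add: e_def pt_def sg_def J_lin_rules[OF p] J_k[OF p] J_t[OF p] J_x[OF p] J_y[OF p] tab0 tab1 tab2 Gs Hs algebra_simps)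
    next
      case (4 j)
      then show ?thesis using ca by (simp add: e_def pt_def sg_def J_lin_rules[OF p] J_k[OF p] J_t[OF p] J_x[OF p] J_y[OF p] tab0 tab1 tab2 Gs Hs algebra_simps)
    qed
  next
    case (3 i)
    note ca = this
    from b show ?thesis
    proof (cases rule: e_cases)
      case 1
      then show ?thesis using ca by (simp add: e_def pt_def sg_def J_lin_rules[OF p] J_k[OF p] J_t[OF p] J_x[OF p] J_y[OF p] tab0 tab1 tab2 Gs Hs algebra_simps)
    next
      case 2
      then show ?thesis using ca by (simp add: e_def pt_def sg_def J_lin_rules[OF p] J_k[OF p] J_t[OF p] J_x[OF p] J_y[OF p] tab0 tab1 tab2 Gs Hs algebra_simps)
    next
      case (3 j)
      then show ?thesis using ca by (simp add: e_def pt_def sg_def J_lin_rules[OF p] J_k[OF p] J_t[OF p] J_x[OF p] J_y[OF p] tab0 tab1 tab2 Gs Hs algebra_simps)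
    next
      case (4 j)
      then show ?thesis using ca by (simp add: e_def pt_def sg_def J_lin_rules[OF p] J_k[OF p] J_t[OF p] J_x[OF p] J_y[OF p] tab0 tab1 tab2 Gs Hs algebra_simps)
    qed
  next
    case (4 i)
    note ca = this
    from b show ?thesis
    proof (cases rule: e_cases)
      case 1
      then show ?thesis using ca by (simp add: e_def pt_def sg_def J_lin_rules[OF p] J_k[OF p] J_t[OF p] J_x[OF p] J_y[OF p] tab0 tab1 tab2 Gs Hs algebra_simps)
    next
      case 2
      then show ?thesis using ca by (simp add: e_def pt_def sg_def J_lin_rules[OF p] J_k[OF p] J_t[OF p] J_x[OF p] J_y[OF p] tab0 tab1 tab2 Gs Hs algebra_simps)
    next
      case (3 j)
      then show ?thesis using ca by (simp add: e_def pt_def sg_def J_lin_rules[OF p] J_k[OF p] J_t[OF p] J_x[OF p] J_y[OF p] tab0 tab1 tab2 Gs Hs algebra_simps)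
    next
      case (4 j)
      then show ?thesis using ca by (simp add: e_def pt_def sg_def J_lin_rules[OF p] J_k[OF p] J_t[OF p] J_x[OF p] J_y[OF p] tab0 tab1 tab2 Gs Hs algebra_simps)
    qed
  qed
  finally show ?thesis .
qed

abbreviation SM where "SM \<equiv> smooth_on U"

lemma dif: "SM X \<Longrightarrow> X differentiable (at p)" using sm_diffable'[OF _ p] .

lemma N_cong1:
  assumes h0: "\<And>q. q \<in> U \<Longrightarrow> X q = X' q"
  shows "nijenhuis J X Y p = nijenhuis J X' Y p"
proof -
  have h: "\<And>q. q \<in> U \<Longrightarrow> acs_apply J X q = acs_apply J X' q" using h0 by (simp add: acs_apply_def)
  show ?thesis unfolding nijenhuis_def
    using lb_cong1[OF U_open p h] lb_cong1[OF U_open p h0] by simp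
qed

lemma N_antisym: "nijenhuis J X Y p = - nijenhuis J Y X p"
proof -
  have 1: "lie_bracket (acs_apply J X) (acs_apply J Y) p = - lie_bracket (acs_apply J Y) (acs_apply J X) p"
    "lie_bracket (acs_apply J X) Y p = - lie_bracket Y (acs_apply J X) p"
    "lie_bracket X (acs_apply J Y) p = - lie_bracket (acs_apply J Y) X p"
    "lie_bracket X Y p = - lie_bracket Y X p" by (rule lb_antisym)+
  show ?thesis unfolding nijenhuis_def 1 J_lin_rules(3)[OF p] by (simp add: algebra_simps)
qed

lemma N_add1:
  assumes X1: "SM X1" and X2: "SM X2" and Y: "SM Y"
  shows "nijenhuis J (\<lambda>q. X1 q + X2 q) Y p = nijenhuis J X1 Y p + nijenhuis J X2 Y p"
proof -
  have h: "\<And>q. q \<in> U \<Longrightarrow> acs_apply J (\<lambda>q. X1 q + X2 q) q = (\<lambda>q. acs_apply J X1 q + acs_apply J X2 q) q"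
    by (simp add: acs_apply_def J_lin_rules)
  note d = dif[OF X1] dif[OF X2] dif[OF Y] dif[OF Jcomp_sm[OF X1]] dif[OF Jcomp_sm[OF X2]] dif[OF Jcomp_sm[OF Y]]
  have c: "lie_bracket (acs_apply J (\<lambda>q. X1 q + X2 q)) W p = lie_bracket (\<lambda>q. acs_apply J X1 q + acs_apply J X2 q) W p" for W
    using lb_cong1[OF U_open p h] by simp
  show ?thesis unfolding nijenhuis_def c
    by (simp add: lb_add1 d J_lin_rules(1,4)[OF p] algebra_simps)
qed

lemma N_scale1:
  assumes f: "SM f" and X: "SM X" and Y: "SM Y"
  shows "nijenhuis J (\<lambda>q. f q *\<^sub>R X q) Y p = f p *\<^sub>R nijenhuis J X Y p"
proof -
  have h: "\<And>q. q \<in> U \<Longrightarrow> acs_apply J (\<lambda>q. f q *\<^sub>R X q) q = (\<lambda>q. f q *\<^sub>R acs_apply J X q) q"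
    by (simp add: acs_apply_def J_lin_rules)
  note d = dif[OF f] dif[OF X] dif[OF Y] dif[OF Jcomp_sm[OF X]] dif[OF Jcomp_sm[OF Y]]
  have jj: "J p (acs_apply J X p) = - X p" unfolding acs_apply_def by (rule JJ[OF p])
  have c: "lie_bracket (acs_apply J (\<lambda>q. f q *\<^sub>R X q)) W p = lie_bracket (\<lambda>q. f q *\<^sub>R acs_apply J X q) W p" for W
    using lb_cong1[OF U_open p h] by simp
  show ?thesis
  proof -
    have b1: "lie_bracket (\<lambda>q. f q *\<^sub>R acs_apply J X q) W p = f p *\<^sub>R lie_bracket (acs_apply J X) W p - frechet_derivative f (at p) (W p) *\<^sub>R acs_apply J X p"
      if "SM W" for W using lb_scale1 d dif[OF that] by blast
    have b2: "lie_bracket (\<lambda>q. f q *\<^sub>R X q) W p = f p *\<^sub>R lie_bracket X W p - frechet_derivative f (at p) (W p) *\<^sub>R X p"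
      if "SM W" for W using lb_scale1 d dif[OF that] by blast
    have aX: "acs_apply J X p = J p (X p)" by (simp add: acs_apply_def)
    show ?thesis
      unfolding nijenhuis_def c b1[OF Y] b1[OF Jcomp_sm[OF Y]] b2[OF Y] b2[OF Jcomp_sm[OF Y]]
      by (simp add: J_lin_rules(2,3,4)[OF p] jj algebra_simps aX JJ[OF p])
  qed
qed

lemma coef_sm: "SM X \<Longrightarrow> a \<in> Idx \<Longrightarrow> SM (\<lambda>q. g q (X q) (e a q))"
  by (intro gcomp_sm e_sm)

lemma tens:
  fixes T :: "('a \<Rightarrow> 'a) \<Rightarrow> 'v::real_vector"
  assumes cong: "\<And>X X'. (\<And>q. q \<in> U \<Longrightarrow> X q = X' q) \<Longrightarrow> T X = T X'"
    and add: "\<And>X1 X2. SM X1 \<Longrightarrow> SM X2 \<Longrightarrow> T (\<lambda>q. X1 q + X2 q) = T X1 + T X2"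
    and scale: "\<And>f X. SM f \<Longrightarrow> SM X \<Longrightarrow> T (\<lambda>q. f q *\<^sub>R X q) = f p *\<^sub>R T X"
    and X: "SM X"
  shows "T X = (\<Sum>a\<in>Idx. g p (X p) (e a p) *\<^sub>R T (e a))"
proof -
  have "T X = T (\<lambda>q. \<Sum>a\<in>Idx. g q (X q) (e a q) *\<^sub>R e a q)"
    by (rule cong) (rule expand)
  also have "\<dots> = (\<Sum>a\<in>Idx. g p (X p) (e a p) *\<^sub>R T (e a))"
    by (rule tensorial[OF U_open cong add scale]) (simp_all add: coef_sm X e_sm)
  finally show ?thesis .
qed

lemma N_zero:
  assumes X: "SM X" and Y: "SM Y"
  shows "nijenhuis J X Y p = 0"
proof -
  have NY: "nijenhuis J Z W p = (\<Sum>a\<in>Idx. g p (Z p) (e a p) *\<^sub>R nijenhuis J (e a) W p)" if "SM Z" "SM W" for Z W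
    using that
    by (intro tens[where T="\<lambda>X. nijenhuis J X W p"] N_cong1 N_add1 N_scale1) simp_all
  have "nijenhuis J (e a) Y p = 0" if a: "a \<in> Idx" for a
  proof -
    have "nijenhuis J (e a) Y p = - nijenhuis J Y (e a) p" by (rule N_antisym)
    also have "\<dots> = - (\<Sum>b\<in>Idx. g p (Y p) (e b p) *\<^sub>R nijenhuis J (e b) (e a) p)"
      using NY[OF Y e_sm[OF a]] by simp
    also have "\<dots> = 0" using N_core a by simp
    finally show ?thesis .
  qed
  then show ?thesis using NY[OF X Y] by simp
qed

abbreviation "om \<equiv> fundamental_form g J"
abbreviation "ED \<equiv> ext_deriv2 om"

lemma om_at: "om X Y q = g q (J q (X q)) (Y q)" by (simp add: fundamental_form_def)

lemma om_sm: "SM X \<Longrightarrow> SM Y \<Longrightarrow> SM (om X Y)"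
  using gcomp_sm[OF Jcomp_sm] unfolding fundamental_form_def acs_apply_def by blast

lemma om_dif: "SM X \<Longrightarrow> SM Y \<Longrightarrow> om X Y differentiable (at p)"
  using dif om_sm by blast

lemma g_rules:
  assumes q: "q \<in> U"
  shows "g q (u + v) w = g q u w + g q v w" "g q w (u + v) = g q w u + g q w v"
    "g q (c *\<^sub>R u) w = c * g q u w" "g q w (c *\<^sub>R u) = c * g q w u"
    "g q (- u) w = - g q u w" "g q w (- u) = - g q w u"
    "g q (u - v) w = g q u w - g q v w" "g q w (u - v) = g q w u - g q w v"
    "g q 0 w = 0" "g q w 0 = 0"
  using g_bil[OF q]
  by (simp_all add: bilinear_ladd bilinear_radd bilinear_lmul bilinear_rmul bilinear_lneg bilinear_rneg
      bilinear_lsub bilinear_rsub bilinear_lzero bilinear_rzero)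

lemma om_skew: "q \<in> U \<Longrightarrow> g q (J q u) v = - g q (J q v) u"
proof -
  assume q: "q \<in> U"
  have "g q (J q u) v = g q (J q (J q u)) (J q v)" by (rule compat[OF q, symmetric])
  also have "\<dots> = - g q u (J q v)" by (simp add: JJ[OF q] g_rules[OF q])
  also have "\<dots> = - g q (J q v) u" by (simp add: g_sym[OF q])
  finally show ?thesis .
qed

lemma ED_cong1:
  assumes h: "\<And>q. q \<in> U \<Longrightarrow> X q = X' q"
  shows "ED X Y Z p = ED X' Y Z p"
proof -
  have c1: "vf_apply W (om X V) p = vf_apply W (om X' V) p" for W V
    by (rule vf_cong[OF U_open p]) (simp add: om_at h)
  show ?thesis unfolding ext_deriv2_def c1
    using lb_cong1[OF U_open p h] h[OF p] by (simp add: om_at vf_apply_def)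
qed

lemma ED_swap12:
  assumes X: "SM X" and Y: "SM Y" and Z: "SM Z"
  shows "ED Y X Z p = - ED X Y Z p"
proof -
  have 1: "vf_apply Z (om Y X) p = - vf_apply Z (om X Y) p"
  proof -
    have "vf_apply Z (om Y X) p = vf_apply Z (\<lambda>q. - om X Y q) p"
      by (rule vf_cong[OF U_open p]) (unfold om_at, rule om_skew)
    also have "\<dots> = - vf_apply Z (om X Y) p" by (rule vf_neg[OF om_dif[OF X Y]])
    finally show ?thesis .
  qed
  have 2: "om (lie_bracket Y X) Z p = - om (lie_bracket X Y) Z p"
    by (simp add: om_at lb_antisym[of Y X] J_lin_rules[OF p] g_rules[OF p])
  show ?thesis unfolding ext_deriv2_def 1 2 by simp
qed

lemma ED_swap23:
  assumes X: "SM X" and Y: "SM Y" and Z: "SM Z"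
  shows "ED X Z Y p = - ED X Y Z p"
proof -
  have 1: "vf_apply X (om Z Y) p = - vf_apply X (om Y Z) p"
  proof -
    have "vf_apply X (om Z Y) p = vf_apply X (\<lambda>q. - om Y Z q) p"
      by (rule vf_cong[OF U_open p]) (unfold om_at, rule om_skew)
    also have "\<dots> = - vf_apply X (om Y Z) p" by (rule vf_neg[OF om_dif[OF Y Z]])
    finally show ?thesis .
  qed
  have 2: "om (lie_bracket Z Y) X p = - om (lie_bracket Y Z) X p"
    by (simp add: om_at lb_antisym[of Z Y] J_lin_rules[OF p] g_rules[OF p])
  show ?thesis unfolding ext_deriv2_def 1 2 by simp
qed

lemma ED_add1:
  assumes X1: "SM X1" and X2: "SM X2" and Y: "SM Y" and Z: "SM Z"
  shows "ED (\<lambda>q. X1 q + X2 q) Y Z p = ED X1 Y Z p + ED X2 Y Z p"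
proof -
  have v: "vf_apply W (om (\<lambda>q. X1 q + X2 q) V) p = vf_apply W (om X1 V) p + vf_apply W (om X2 V) p"
    if V: "SM V" for W V
  proof -
    have "vf_apply W (om (\<lambda>q. X1 q + X2 q) V) p = vf_apply W (\<lambda>q. om X1 V q + om X2 V q) p"
      by (rule vf_cong[OF U_open p]) (simp add: om_at J_lin_rules g_rules)
    also have "\<dots> = vf_apply W (om X1 V) p + vf_apply W (om X2 V) p"
      by (rule vf_add[OF om_dif[OF X1 V] om_dif[OF X2 V]])
    finally show ?thesis .
  qed
  have w: "vf_apply (\<lambda>q. X1 q + X2 q) (om Y Z) p = vf_apply X1 (om Y Z) p + vf_apply X2 (om Y Z) p"
    by (rule vf_addX[OF om_dif[OF Y Z]])
  have l: "lie_bracket (\<lambda>q. X1 q + X2 q) V p = lie_bracket X1 V p + lie_bracket X2 V p" if V: "SM V" for V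
    by (rule lb_add1[OF dif[OF X1] dif[OF X2] dif[OF V]])
  show ?thesis unfolding ext_deriv2_def v[OF Y] v[OF Z] w unfolding om_at l[OF Y] l[OF Z]
    by (simp add: om_at J_lin_rules[OF p] g_rules[OF p] algebra_simps)
qed

lemma ED_scale1:
  assumes f: "SM f" and X: "SM X" and Y: "SM Y" and Z: "SM Z"
  shows "ED (\<lambda>q. f q *\<^sub>R X q) Y Z p = f p *\<^sub>R ED X Y Z p"
proof -
  have v: "vf_apply W (om (\<lambda>q. f q *\<^sub>R X q) V) p = f p * vf_apply W (om X V) p + vf_apply W f p * om X V p"
    if V: "SM V" for W V
  proof -
    have "vf_apply W (om (\<lambda>q. f q *\<^sub>R X q) V) p = vf_apply W (\<lambda>q. f q * om X V q) p"
      by (rule vf_cong[OF U_open p]) (simp add: om_at J_lin_rules g_rules)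
    also have "\<dots> = f p * vf_apply W (om X V) p + vf_apply W f p * om X V p"
      by (rule vf_mult[OF dif[OF f] om_dif[OF X V]])
    finally show ?thesis .
  qed
  have w: "vf_apply (\<lambda>q. f q *\<^sub>R X q) (om Y Z) p = f p * vf_apply X (om Y Z) p"
    by (rule vf_scaleX[OF om_dif[OF Y Z]])
  have l: "lie_bracket (\<lambda>q. f q *\<^sub>R X q) V p = f p *\<^sub>R lie_bracket X V p - vf_apply V f p *\<^sub>R X p" if V: "SM V" for V
    unfolding vf_apply_def by (rule lb_scale1[OF dif[OF f] dif[OF X] dif[OF V]])
  show ?thesis unfolding ext_deriv2_def v[OF Y] v[OF Z] w unfolding om_at l[OF Y] l[OF Z]
    by (simp add: om_at J_lin_rules[OF p] g_rules[OF p] algebra_simps)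
qed

lemma orth0: "g p (k p) (k p) = 1" "g p (t p) (t p) = 1" "g p (k p) (t p) = 0" "g p (t p) (k p) = 0"
  using on_kk[OF p] on_tt[OF p] on_kt[OF p] g_sym[OF p, of "t p" "k p"] by auto

lemma orth1: assumes i: "i \<in> {1..n}" shows
  "g p (k p) (x i p) = 0" "g p (x i p) (k p) = 0" "g p (k p) (y i p) = 0" "g p (y i p) (k p) = 0"
  "g p (t p) (x i p) = 0" "g p (x i p) (t p) = 0" "g p (t p) (y i p) = 0" "g p (y i p) (t p) = 0"
  using on_kx[OF p i] on_ky[OF p i] on_tx[OF p i] on_ty[OF p i] g_sym[OF p] by metis+

lemma orth2: assumes i: "i \<in> {1..n}" and j: "j \<in> {1..n}" shows
  "g p (x i p) (x j p) = (if i = j then 1 else 0)" "g p (y i p) (y j p) = (if i = j then 1 else 0)"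
  "g p (x i p) (y j p) = 0" "g p (y j p) (x i p) = 0"
  using on_xx[OF p i j] on_yy[OF p i j] on_xy[OF p i j] g_sym[OF p, of "y j p" "x i p"] by auto

lemma om_e_const:
  assumes q: "q \<in> U" and a: "a \<in> Idx" and b: "b \<in> Idx"
  shows "om (e a) (e b) q = sg a * (if pt a = b then 1 else 0)"
  unfolding om_at using Je[OF q a] e_orth[OF q pt_Idx[OF a] b] g_rules(3)[OF q] by simp

lemma ED_core:
  assumes a: "a \<in> Idx" and b: "b \<in> Idx" and c: "c \<in> Idx"
  shows "ED (e a) (e b) (e c) p = 0"
proof -
  have Ns: "N i p = A i p + D i p" if "i \<in> {1..n}" for i using rel3[OF p that] by simp
  have Hs: "H i p = - E i p - A i p - D i p" if "i \<in> {1..n}" for i using rel3[OF p that] rel4[OF p that] by simp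
  have v: "vf_apply W (om (e u) (e w)) p = 0" if "u \<in> Idx" "w \<in> Idx" for W u w
    by (rule vf_const[OF U_open p]) (rule om_e_const[OF _ that])
  have "ED (e a) (e b) (e c) p =
      - g p (J p (lie_bracket (e a) (e b) p)) (e c p) + g p (J p (lie_bracket (e a) (e c) p)) (e b p)
      - g p (J p (lie_bracket (e b) (e c) p)) (e a p)"
    unfolding ext_deriv2_def v[OF b c] v[OF a c] v[OF a b] om_at by simp
  also have "\<dots> = 0"
    using a
  proof (cases rule: e_cases)
    case 1
    note c0 = this
    from b show ?thesis
    proof (cases rule: e_cases)
      case 1
      note c1 = this
      from c show ?thesis
      proof (cases rule: e_cases)
        case 1
        note c2 = this
        then show ?thesis using c0 c1 by (simp add: J_lin_rules[OF p] J_k[OF p] J_t[OF p] J_x[OF p] J_y[OF p] tab0 tab1 tab2 g_rules[OF p] orth0 orth1 orth2 Ns Hs algebra_simps)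
      next
        case 2
        note c2 = this
        then show ?thesis using c0 c1 by (simp add: J_lin_rules[OF p] J_k[OF p] J_t[OF p] J_x[OF p] J_y[OF p] tab0 tab1 tab2 g_rules[OF p] orth0 orth1 orth2 Ns Hs algebra_simps)
      next
        case (3 l)
        note c2 = this
        then show ?thesis using c0 c1 by (simp add: J_lin_rules[OF p] J_k[OF p] J_t[OF p] J_x[OF p] J_y[OF p] tab0 tab1 tab2 g_rules[OF p] orth0 orth1 orth2 Ns Hs algebra_simps)
      next
        case (4 l)
        note c2 = this
        then show ?thesis using c0 c1 by (simp add: J_lin_rules[OF p] J_k[OF p] J_t[OF p] J_x[OF p] J_y[OF p] tab0 tab1 tab2 g_rules[OF p] orth0 orth1 orth2 Ns Hs algebra_simps)
      qed
    next
      case 2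
      note c1 = this
      from c show ?thesis
      proof (cases rule: e_cases)
        case 1
        note c2 = this
        then show ?thesis using c0 c1 by (simp add: J_lin_rules[OF p] J_k[OF p] J_t[OF p] J_x[OF p] J_y[OF p] tab0 tab1 tab2 g_rules[OF p] orth0 orth1 orth2 Ns Hs algebra_simps)
      next
        case 2
        note c2 = this
        then show ?thesis using c0 c1 by (simp add: J_lin_rules[OF p] J_k[OF p] J_t[OF p] J_x[OF p] J_y[OF p] tab0 tab1 tab2 g_rules[OF p] orth0 orth1 orth2 Ns Hs algebra_simps)
      next
        case (3 l)
        note c2 = this
        then show ?thesis using c0 c1 by (simp add: J_lin_rules[OF p] J_k[OF p] J_t[OF p] J_x[OF p] J_y[OF p] tab0 tab1 tab2 g_rules[OF p] orth0 orth1 orth2 Ns Hs algebra_simps)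
      next
        case (4 l)
        note c2 = this
        then show ?thesis using c0 c1 by (simp add: J_lin_rules[OF p] J_k[OF p] J_t[OF p] J_x[OF p] J_y[OF p] tab0 tab1 tab2 g_rules[OF p] orth0 orth1 orth2 Ns Hs algebra_simps)
      qed
    next
      case (3 j)
      note c1 = this
      from c show ?thesis
      proof (cases rule: e_cases)
        case 1
        note c2 = this
        then show ?thesis using c0 c1 by (simp add: J_lin_rules[OF p] J_k[OF p] J_t[OF p] J_x[OF p] J_y[OF p] tab0 tab1 tab2 g_rules[OF p] orth0 orth1 orth2 Ns Hs algebra_simps)
      next
        case 2
        note c2 = this
        then show ?thesis using c0 c1 by (simp add: J_lin_rules[OF p] J_k[OF p] J_t[OF p] J_x[OF p] J_y[OF p] tab0 tab1 tab2 g_rules[OF p] orth0 orth1 orth2 Ns Hs algebra_simps)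
      next
        case (3 l)
        note c2 = this
        then show ?thesis using c0 c1 by (simp add: J_lin_rules[OF p] J_k[OF p] J_t[OF p] J_x[OF p] J_y[OF p] tab0 tab1 tab2 g_rules[OF p] orth0 orth1 orth2 Ns Hs algebra_simps)
      next
        case (4 l)
        note c2 = this
        then show ?thesis using c0 c1 by (simp add: J_lin_rules[OF p] J_k[OF p] J_t[OF p] J_x[OF p] J_y[OF p] tab0 tab1 tab2 g_rules[OF p] orth0 orth1 orth2 Ns Hs algebra_simps)
      qed
    next
      case (4 j)
      note c1 = this
      from c show ?thesis
      proof (cases rule: e_cases)
        case 1
        note c2 = this
        then show ?thesis using c0 c1 by (simp add: J_lin_rules[OF p] J_k[OF p] J_t[OF p] J_x[OF p] J_y[OF p] tab0 tab1 tab2 g_rules[OF p] orth0 orth1 orth2 Ns Hs algebra_simps)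
      next
        case 2
        note c2 = this
        then show ?thesis using c0 c1 by (simp add: J_lin_rules[OF p] J_k[OF p] J_t[OF p] J_x[OF p] J_y[OF p] tab0 tab1 tab2 g_rules[OF p] orth0 orth1 orth2 Ns Hs algebra_simps)
      next
        case (3 l)
        note c2 = this
        then show ?thesis using c0 c1 by (simp add: J_lin_rules[OF p] J_k[OF p] J_t[OF p] J_x[OF p] J_y[OF p] tab0 tab1 tab2 g_rules[OF p] orth0 orth1 orth2 Ns Hs algebra_simps)
      next
        case (4 l)
        note c2 = this
        then show ?thesis using c0 c1 by (simp add: J_lin_rules[OF p] J_k[OF p] J_t[OF p] J_x[OF p] J_y[OF p] tab0 tab1 tab2 g_rules[OF p] orth0 orth1 orth2 Ns Hs algebra_simps)
      qed
    qed
  next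
    case 2
    note c0 = this
    from b show ?thesis
    proof (cases rule: e_cases)
      case 1
      note c1 = this
      from c show ?thesis
      proof (cases rule: e_cases)
        case 1
        note c2 = this
        then show ?thesis using c0 c1 by (simp add: J_lin_rules[OF p] J_k[OF p] J_t[OF p] J_x[OF p] J_y[OF p] tab0 tab1 tab2 g_rules[OF p] orth0 orth1 orth2 Ns Hs algebra_simps)
      next
        case 2
        note c2 = this
        then show ?thesis using c0 c1 by (simp add: J_lin_rules[OF p] J_k[OF p] J_t[OF p] J_x[OF p] J_y[OF p] tab0 tab1 tab2 g_rules[OF p] orth0 orth1 orth2 Ns Hs algebra_simps)
      next
        case (3 l)
        note c2 = this
        then show ?thesis using c0 c1 by (simp add: J_lin_rules[OF p] J_k[OF p] J_t[OF p] J_x[OF p] J_y[OF p] tab0 tab1 tab2 g_rules[OF p] orth0 orth1 orth2 Ns Hs algebra_simps)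
      next
        case (4 l)
        note c2 = this
        then show ?thesis using c0 c1 by (simp add: J_lin_rules[OF p] J_k[OF p] J_t[OF p] J_x[OF p] J_y[OF p] tab0 tab1 tab2 g_rules[OF p] orth0 orth1 orth2 Ns Hs algebra_simps)
      qed
    next
      case 2
      note c1 = this
      from c show ?thesis
      proof (cases rule: e_cases)
        case 1
        note c2 = this
        then show ?thesis using c0 c1 by (simp add: J_lin_rules[OF p] J_k[OF p] J_t[OF p] J_x[OF p] J_y[OF p] tab0 tab1 tab2 g_rules[OF p] orth0 orth1 orth2 Ns Hs algebra_simps)
      next
        case 2
        note c2 = this
        then show ?thesis using c0 c1 by (simp add: J_lin_rules[OF p] J_k[OF p] J_t[OF p] J_x[OF p] J_y[OF p] tab0 tab1 tab2 g_rules[OF p] orth0 orth1 orth2 Ns Hs algebra_simps)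
      next
        case (3 l)
        note c2 = this
        then show ?thesis using c0 c1 by (simp add: J_lin_rules[OF p] J_k[OF p] J_t[OF p] J_x[OF p] J_y[OF p] tab0 tab1 tab2 g_rules[OF p] orth0 orth1 orth2 Ns Hs algebra_simps)
      next
        case (4 l)
        note c2 = this
        then show ?thesis using c0 c1 by (simp add: J_lin_rules[OF p] J_k[OF p] J_t[OF p] J_x[OF p] J_y[OF p] tab0 tab1 tab2 g_rules[OF p] orth0 orth1 orth2 Ns Hs algebra_simps)
      qed
    next
      case (3 j)
      note c1 = this
      from c show ?thesis
      proof (cases rule: e_cases)
        case 1
        note c2 = this
        then show ?thesis using c0 c1 by (simp add: J_lin_rules[OF p] J_k[OF p] J_t[OF p] J_x[OF p] J_y[OF p] tab0 tab1 tab2 g_rules[OF p] orth0 orth1 orth2 Ns Hs algebra_simps)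
      next
        case 2
        note c2 = this
        then show ?thesis using c0 c1 by (simp add: J_lin_rules[OF p] J_k[OF p] J_t[OF p] J_x[OF p] J_y[OF p] tab0 tab1 tab2 g_rules[OF p] orth0 orth1 orth2 Ns Hs algebra_simps)
      next
        case (3 l)
        note c2 = this
        then show ?thesis using c0 c1 by (simp add: J_lin_rules[OF p] J_k[OF p] J_t[OF p] J_x[OF p] J_y[OF p] tab0 tab1 tab2 g_rules[OF p] orth0 orth1 orth2 Ns Hs algebra_simps)
      next
        case (4 l)
        note c2 = this
        then show ?thesis using c0 c1 by (simp add: J_lin_rules[OF p] J_k[OF p] J_t[OF p] J_x[OF p] J_y[OF p] tab0 tab1 tab2 g_rules[OF p] orth0 orth1 orth2 Ns Hs algebra_simps)
      qed
    next
      case (4 j)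
      note c1 = this
      from c show ?thesis
      proof (cases rule: e_cases)
        case 1
        note c2 = this
        then show ?thesis using c0 c1 by (simp add: J_lin_rules[OF p] J_k[OF p] J_t[OF p] J_x[OF p] J_y[OF p] tab0 tab1 tab2 g_rules[OF p] orth0 orth1 orth2 Ns Hs algebra_simps)
      next
        case 2
        note c2 = this
        then show ?thesis using c0 c1 by (simp add: J_lin_rules[OF p] J_k[OF p] J_t[OF p] J_x[OF p] J_y[OF p] tab0 tab1 tab2 g_rules[OF p] orth0 orth1 orth2 Ns Hs algebra_simps)
      next
        case (3 l)
        note c2 = this
        then show ?thesis using c0 c1 by (simp add: J_lin_rules[OF p] J_k[OF p] J_t[OF p] J_x[OF p] J_y[OF p] tab0 tab1 tab2 g_rules[OF p] orth0 orth1 orth2 Ns Hs algebra_simps)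
      next
        case (4 l)
        note c2 = this
        then show ?thesis using c0 c1 by (simp add: J_lin_rules[OF p] J_k[OF p] J_t[OF p] J_x[OF p] J_y[OF p] tab0 tab1 tab2 g_rules[OF p] orth0 orth1 orth2 Ns Hs algebra_simps)
      qed
    qed
  next
    case (3 i)
    note c0 = this
    from b show ?thesis
    proof (cases rule: e_cases)
      case 1
      note c1 = this
      from c show ?thesis
      proof (cases rule: e_cases)
        case 1
        note c2 = this
        then show ?thesis using c0 c1 by (simp add: J_lin_rules[OF p] J_k[OF p] J_t[OF p] J_x[OF p] J_y[OF p] tab0 tab1 tab2 g_rules[OF p] orth0 orth1 orth2 Ns Hs algebra_simps)
      next
        case 2
        note c2 = this
        then show ?thesis using c0 c1 by (simp add: J_lin_rules[OF p] J_k[OF p] J_t[OF p] J_x[OF p] J_y[OF p] tab0 tab1 tab2 g_rules[OF p] orth0 orth1 orth2 Ns Hs algebra_simps)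
      next
        case (3 l)
        note c2 = this
        then show ?thesis using c0 c1 by (simp add: J_lin_rules[OF p] J_k[OF p] J_t[OF p] J_x[OF p] J_y[OF p] tab0 tab1 tab2 g_rules[OF p] orth0 orth1 orth2 Ns Hs algebra_simps)
      next
        case (4 l)
        note c2 = this
        then show ?thesis using c0 c1 by (simp add: J_lin_rules[OF p] J_k[OF p] J_t[OF p] J_x[OF p] J_y[OF p] tab0 tab1 tab2 g_rules[OF p] orth0 orth1 orth2 Ns Hs algebra_simps)
      qed
    next
      case 2
      note c1 = this
      from c show ?thesis
      proof (cases rule: e_cases)
        case 1
        note c2 = this
        then show ?thesis using c0 c1 by (simp add: J_lin_rules[OF p] J_k[OF p] J_t[OF p] J_x[OF p] J_y[OF p] tab0 tab1 tab2 g_rules[OF p] orth0 orth1 orth2 Ns Hs algebra_simps)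
      next
        case 2
        note c2 = this
        then show ?thesis using c0 c1 by (simp add: J_lin_rules[OF p] J_k[OF p] J_t[OF p] J_x[OF p] J_y[OF p] tab0 tab1 tab2 g_rules[OF p] orth0 orth1 orth2 Ns Hs algebra_simps)
      next
        case (3 l)
        note c2 = this
        then show ?thesis using c0 c1 by (simp add: J_lin_rules[OF p] J_k[OF p] J_t[OF p] J_x[OF p] J_y[OF p] tab0 tab1 tab2 g_rules[OF p] orth0 orth1 orth2 Ns Hs algebra_simps)
      next
        case (4 l)
        note c2 = this
        then show ?thesis using c0 c1 by (simp add: J_lin_rules[OF p] J_k[OF p] J_t[OF p] J_x[OF p] J_y[OF p] tab0 tab1 tab2 g_rules[OF p] orth0 orth1 orth2 Ns Hs algebra_simps)
      qed
    next
      case (3 j)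
      note c1 = this
      from c show ?thesis
      proof (cases rule: e_cases)
        case 1
        note c2 = this
        then show ?thesis using c0 c1 by (simp add: J_lin_rules[OF p] J_k[OF p] J_t[OF p] J_x[OF p] J_y[OF p] tab0 tab1 tab2 g_rules[OF p] orth0 orth1 orth2 Ns Hs algebra_simps)
      next
        case 2
        note c2 = this
        then show ?thesis using c0 c1 by (simp add: J_lin_rules[OF p] J_k[OF p] J_t[OF p] J_x[OF p] J_y[OF p] tab0 tab1 tab2 g_rules[OF p] orth0 orth1 orth2 Ns Hs algebra_simps)
      next
        case (3 l)
        note c2 = this
        then show ?thesis using c0 c1 by (simp add: J_lin_rules[OF p] J_k[OF p] J_t[OF p] J_x[OF p] J_y[OF p] tab0 tab1 tab2 g_rules[OF p] orth0 orth1 orth2 Ns Hs algebra_simps)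
      next
        case (4 l)
        note c2 = this
        then show ?thesis using c0 c1 by (simp add: J_lin_rules[OF p] J_k[OF p] J_t[OF p] J_x[OF p] J_y[OF p] tab0 tab1 tab2 g_rules[OF p] orth0 orth1 orth2 Ns Hs algebra_simps)
      qed
    next
      case (4 j)
      note c1 = this
      from c show ?thesis
      proof (cases rule: e_cases)
        case 1
        note c2 = this
        then show ?thesis using c0 c1 by (simp add: J_lin_rules[OF p] J_k[OF p] J_t[OF p] J_x[OF p] J_y[OF p] tab0 tab1 tab2 g_rules[OF p] orth0 orth1 orth2 Ns Hs algebra_simps)
      next
        case 2
        note c2 = this
        then show ?thesis using c0 c1 by (simp add: J_lin_rules[OF p] J_k[OF p] J_t[OF p] J_x[OF p] J_y[OF p] tab0 tab1 tab2 g_rules[OF p] orth0 orth1 orth2 Ns Hs algebra_simps)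
      next
        case (3 l)
        note c2 = this
        then show ?thesis using c0 c1 by (simp add: J_lin_rules[OF p] J_k[OF p] J_t[OF p] J_x[OF p] J_y[OF p] tab0 tab1 tab2 g_rules[OF p] orth0 orth1 orth2 Ns Hs algebra_simps)
      next
        case (4 l)
        note c2 = this
        then show ?thesis using c0 c1 by (simp add: J_lin_rules[OF p] J_k[OF p] J_t[OF p] J_x[OF p] J_y[OF p] tab0 tab1 tab2 g_rules[OF p] orth0 orth1 orth2 Ns Hs algebra_simps)
      qed
    qed
  next
    case (4 i)
    note c0 = this
    from b show ?thesis
    proof (cases rule: e_cases)
      case 1
      note c1 = this
      from c show ?thesis
      proof (cases rule: e_cases)
        case 1
        note c2 = this
        then show ?thesis using c0 c1 by (simp add: J_lin_rules[OF p] J_k[OF p] J_t[OF p] J_x[OF p] J_y[OF p] tab0 tab1 tab2 g_rules[OF p] orth0 orth1 orth2 Ns Hs algebra_simps)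
      next
        case 2
        note c2 = this
        then show ?thesis using c0 c1 by (simp add: J_lin_rules[OF p] J_k[OF p] J_t[OF p] J_x[OF p] J_y[OF p] tab0 tab1 tab2 g_rules[OF p] orth0 orth1 orth2 Ns Hs algebra_simps)
      next
        case (3 l)
        note c2 = this
        then show ?thesis using c0 c1 by (simp add: J_lin_rules[OF p] J_k[OF p] J_t[OF p] J_x[OF p] J_y[OF p] tab0 tab1 tab2 g_rules[OF p] orth0 orth1 orth2 Ns Hs algebra_simps)
      next
        case (4 l)
        note c2 = this
        then show ?thesis using c0 c1 by (simp add: J_lin_rules[OF p] J_k[OF p] J_t[OF p] J_x[OF p] J_y[OF p] tab0 tab1 tab2 g_rules[OF p] orth0 orth1 orth2 Ns Hs algebra_simps)
      qed
    next
      case 2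
      note c1 = this
      from c show ?thesis
      proof (cases rule: e_cases)
        case 1
        note c2 = this
        then show ?thesis using c0 c1 by (simp add: J_lin_rules[OF p] J_k[OF p] J_t[OF p] J_x[OF p] J_y[OF p] tab0 tab1 tab2 g_rules[OF p] orth0 orth1 orth2 Ns Hs algebra_simps)
      next
        case 2
        note c2 = this
        then show ?thesis using c0 c1 by (simp add: J_lin_rules[OF p] J_k[OF p] J_t[OF p] J_x[OF p] J_y[OF p] tab0 tab1 tab2 g_rules[OF p] orth0 orth1 orth2 Ns Hs algebra_simps)
      next
        case (3 l)
        note c2 = this
        then show ?thesis using c0 c1 by (simp add: J_lin_rules[OF p] J_k[OF p] J_t[OF p] J_x[OF p] J_y[OF p] tab0 tab1 tab2 g_rules[OF p] orth0 orth1 orth2 Ns Hs algebra_simps)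
      next
        case (4 l)
        note c2 = this
        then show ?thesis using c0 c1 by (simp add: J_lin_rules[OF p] J_k[OF p] J_t[OF p] J_x[OF p] J_y[OF p] tab0 tab1 tab2 g_rules[OF p] orth0 orth1 orth2 Ns Hs algebra_simps)
      qed
    next
      case (3 j)
      note c1 = this
      from c show ?thesis
      proof (cases rule: e_cases)
        case 1
        note c2 = this
        then show ?thesis using c0 c1 by (simp add: J_lin_rules[OF p] J_k[OF p] J_t[OF p] J_x[OF p] J_y[OF p] tab0 tab1 tab2 g_rules[OF p] orth0 orth1 orth2 Ns Hs algebra_simps)
      next
        case 2
        note c2 = this
        then show ?thesis using c0 c1 by (simp add: J_lin_rules[OF p] J_k[OF p] J_t[OF p] J_x[OF p] J_y[OF p] tab0 tab1 tab2 g_rules[OF p] orth0 orth1 orth2 Ns Hs algebra_simps)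
      next
        case (3 l)
        note c2 = this
        then show ?thesis using c0 c1 by (simp add: J_lin_rules[OF p] J_k[OF p] J_t[OF p] J_x[OF p] J_y[OF p] tab0 tab1 tab2 g_rules[OF p] orth0 orth1 orth2 Ns Hs algebra_simps)
      next
        case (4 l)
        note c2 = this
        then show ?thesis using c0 c1 by (simp add: J_lin_rules[OF p] J_k[OF p] J_t[OF p] J_x[OF p] J_y[OF p] tab0 tab1 tab2 g_rules[OF p] orth0 orth1 orth2 Ns Hs algebra_simps)
      qed
    next
      case (4 j)
      note c1 = this
      from c show ?thesis
      proof (cases rule: e_cases)
        case 1
        note c2 = this
        then show ?thesis using c0 c1 by (simp add: J_lin_rules[OF p] J_k[OF p] J_t[OF p] J_x[OF p] J_y[OF p] tab0 tab1 tab2 g_rules[OF p] orth0 orth1 orth2 Ns Hs algebra_simps)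
      next
        case 2
        note c2 = this
        then show ?thesis using c0 c1 by (simp add: J_lin_rules[OF p] J_k[OF p] J_t[OF p] J_x[OF p] J_y[OF p] tab0 tab1 tab2 g_rules[OF p] orth0 orth1 orth2 Ns Hs algebra_simps)
      next
        case (3 l)
        note c2 = this
        then show ?thesis using c0 c1 by (simp add: J_lin_rules[OF p] J_k[OF p] J_t[OF p] J_x[OF p] J_y[OF p] tab0 tab1 tab2 g_rules[OF p] orth0 orth1 orth2 Ns Hs algebra_simps)
      next
        case (4 l)
        note c2 = this
        then show ?thesis using c0 c1 by (simp add: J_lin_rules[OF p] J_k[OF p] J_t[OF p] J_x[OF p] J_y[OF p] tab0 tab1 tab2 g_rules[OF p] orth0 orth1 orth2 Ns Hs algebra_simps)
      qed
    qed
  qed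
  finally show ?thesis .
qed

lemma ED_zero:
  assumes X: "SM X" and Y: "SM Y" and Z: "SM Z"
  shows "ED X Y Z p = 0"
proof -
  have T: "ED W Y' Z' p = (\<Sum>a\<in>Idx. g p (W p) (e a p) *\<^sub>R ED (e a) Y' Z' p)"
    if "SM W" "SM Y'" "SM Z'" for W Y' Z'
    using that
    by (intro tens[where T="\<lambda>X. ED X Y' Z' p"] ED_cong1 ED_add1 ED_scale1) simp_all
  have s3: "ED (e b) (e a) Z p = 0" if a: "a \<in> Idx" and b: "b \<in> Idx" for a b
  proof -
    have "ED (e b) (e a) Z p = - ED (e b) Z (e a) p"
      using ED_swap23[OF e_sm[OF b] Z e_sm[OF a]] by simp
    also have "\<dots> = ED Z (e b) (e a) p"
      using ED_swap12[OF e_sm[OF b] Z e_sm[OF a]] by simp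
    also have "\<dots> = (\<Sum>c\<in>Idx. g p (Z p) (e c p) *\<^sub>R ED (e c) (e b) (e a) p)"
      by (rule T[OF Z e_sm[OF b] e_sm[OF a]])
    also have "\<dots> = 0" using ED_core a b by simp
    finally show ?thesis .
  qed
  have s2: "ED (e a) Y Z p = 0" if a: "a \<in> Idx" for a
  proof -
    have "ED (e a) Y Z p = - ED Y (e a) Z p"
      using ED_swap12[OF Y e_sm[OF a] Z] by simp
    also have "\<dots> = - (\<Sum>b\<in>Idx. g p (Y p) (e b p) *\<^sub>R ED (e b) (e a) Z p)"
      using T[OF Y e_sm[OF a] Z] by simp
    also have "\<dots> = 0" using s3 a by simp
    finally show ?thesis .
  qed
  show ?thesis using T[OF X Y Z] s2 by simp
qed

end

theorem kaehler: "kaehler_on U g J"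
  unfolding kaehler_on_def
proof (intro conjI allI impI ballI)
  show "riemannian_metric U g" by (rule metric)
  show "almost_complex_structure U J" by (rule acs)
  show "g p (J p v) (J p w) = g p v w" if "p \<in> U" for p v w by (rule compat[OF that])
  show "nijenhuis J X Y p = 0" if "smooth_vector_field U X" "smooth_vector_field U Y" "p \<in> U" for X Y p
    using N_zero[OF that(3)] that(1,2) unfolding smooth_vector_field_def by blast
  show "ext_deriv2 (fundamental_form g J) X Y Z p = 0"
    if "smooth_vector_field U X" "smooth_vector_field U Y" "smooth_vector_field U Z" "p \<in> U" for X Y Z p
    using ED_zero[OF that(4)] that(1-3) unfolding smooth_vector_field_def by blast
qed


end

theorem proposition2p2:
  fixes U :: "'a::euclidean_space set"
    and g :: "'a \<Rightarrow> 'a \<Rightarrow> 'a \<Rightarrow> real"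
    and J :: "'a \<Rightarrow> 'a \<Rightarrow> 'a"
    and n :: nat
    and k t :: "'a \<Rightarrow> 'a"
    and x y :: "nat \<Rightarrow> 'a \<Rightarrow> 'a"
    and A B C D E F G H N :: "nat \<Rightarrow> 'a \<Rightarrow> real"
    and L :: "'a \<Rightarrow> real"
  assumes n: "n \<ge> 1"
    and dim: "DIM('a) = 2 * n + 2"
    and U_open: "open U"
    and metric: "riemannian_metric U g"
    and smooth_k: "smooth_vector_field U k"
    and smooth_t: "smooth_vector_field U t"
    and smooth_x: "\<And>i. i \<in> {1..n} \<Longrightarrow> smooth_vector_field U (x i)"
    and smooth_y: "\<And>i. i \<in> {1..n} \<Longrightarrow> smooth_vector_field U (y i)"
    and smooth_coeffs: "\<And>i. i \<in> {1..n} \<Longrightarrow>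
          smooth_on U (A i) \<and> smooth_on U (B i) \<and> smooth_on U (C i) \<and> smooth_on U (D i) \<and>
          smooth_on U (E i) \<and> smooth_on U (F i) \<and> smooth_on U (G i) \<and> smooth_on U (H i) \<and>
          smooth_on U (N i)"
    and smooth_L: "smooth_on U L"
    and on_kk: "\<And>p. p \<in> U \<Longrightarrow> g p (k p) (k p) = 1"
    and on_tt: "\<And>p. p \<in> U \<Longrightarrow> g p (t p) (t p) = 1"
    and on_kt: "\<And>p. p \<in> U \<Longrightarrow> g p (k p) (t p) = 0"
    and on_kx: "\<And>p i. p \<in> U \<Longrightarrow> i \<in> {1..n} \<Longrightarrow> g p (k p) (x i p) = 0"
    and on_ky: "\<And>p i. p \<in> U \<Longrightarrow> i \<in> {1..n} \<Longrightarrow> g p (k p) (y i p) = 0"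
    and on_tx: "\<And>p i. p \<in> U \<Longrightarrow> i \<in> {1..n} \<Longrightarrow> g p (t p) (x i p) = 0"
    and on_ty: "\<And>p i. p \<in> U \<Longrightarrow> i \<in> {1..n} \<Longrightarrow> g p (t p) (y i p) = 0"
    and on_xx: "\<And>p i j. p \<in> U \<Longrightarrow> i \<in> {1..n} \<Longrightarrow> j \<in> {1..n} \<Longrightarrow>
                  g p (x i p) (x j p) = (if i = j then 1 else 0)"
    and on_yy: "\<And>p i j. p \<in> U \<Longrightarrow> i \<in> {1..n} \<Longrightarrow> j \<in> {1..n} \<Longrightarrow>
                  g p (y i p) (y j p) = (if i = j then 1 else 0)"
    and on_xy: "\<And>p i j. p \<in> U \<Longrightarrow> i \<in> {1..n} \<Longrightarrow> j \<in> {1..n} \<Longrightarrow>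
                  g p (x i p) (y j p) = 0"
    and br_xx: "\<And>p i j. p \<in> U \<Longrightarrow> i \<in> {1..n} \<Longrightarrow> j \<in> {1..n} \<Longrightarrow> i \<noteq> j \<Longrightarrow>
                  lie_bracket (x i) (x j) p = 0"
    and br_xy: "\<And>p i j. p \<in> U \<Longrightarrow> i \<in> {1..n} \<Longrightarrow> j \<in> {1..n} \<Longrightarrow> i \<noteq> j \<Longrightarrow>
                  lie_bracket (x i) (y j) p = 0"
    and br_yy: "\<And>p i j. p \<in> U \<Longrightarrow> i \<in> {1..n} \<Longrightarrow> j \<in> {1..n} \<Longrightarrow> i \<noteq> j \<Longrightarrow>
                  lie_bracket (y i) (y j) p = 0"
    and br_kt: "\<And>p. p \<in> U \<Longrightarrow> lie_bracket k t p = L p *\<^sub>R (k p + t p)"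
    and br_xiyi: "\<And>p i. p \<in> U \<Longrightarrow> i \<in> {1..n} \<Longrightarrow>
                  lie_bracket (x i) (y i) p = N i p *\<^sub>R (k p + t p)"
    and br_kx: "\<And>p i. p \<in> U \<Longrightarrow> i \<in> {1..n} \<Longrightarrow>
                  lie_bracket k (x i) p = A i p *\<^sub>R x i p + B i p *\<^sub>R y i p"
    and br_ky: "\<And>p i. p \<in> U \<Longrightarrow> i \<in> {1..n} \<Longrightarrow>
                  lie_bracket k (y i) p = C i p *\<^sub>R x i p + D i p *\<^sub>R y i p"
    and br_tx: "\<And>p i. p \<in> U \<Longrightarrow> i \<in> {1..n} \<Longrightarrow>
                  lie_bracket t (x i) p = E i p *\<^sub>R x i p + F i p *\<^sub>R y i p"
    and br_ty: "\<And>p i. p \<in> U \<Longrightarrow> i \<in> {1..n} \<Longrightarrow>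
                  lie_bracket t (y i) p = G i p *\<^sub>R x i p + H i p *\<^sub>R y i p"
    and rel1: "\<And>p i. p \<in> U \<Longrightarrow> i \<in> {1..n} \<Longrightarrow> A i p - D i p = F i p + G i p"
    and rel2: "\<And>p i. p \<in> U \<Longrightarrow> i \<in> {1..n} \<Longrightarrow> B i p + C i p = H i p - E i p"
    and rel3: "\<And>p i. p \<in> U \<Longrightarrow> i \<in> {1..n} \<Longrightarrow> N i p = A i p + D i p"
    and rel4: "\<And>p i. p \<in> U \<Longrightarrow> i \<in> {1..n} \<Longrightarrow> N i p = - (E i p + H i p)"
    and J_lin: "\<And>p. p \<in> U \<Longrightarrow> linear (J p)"
    and J_k: "\<And>p. p \<in> U \<Longrightarrow> J p (k p) = t p"
    and J_t: "\<And>p. p \<in> U \<Longrightarrow> J p (t p) = - k p"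
    and J_x: "\<And>p i. p \<in> U \<Longrightarrow> i \<in> {1..n} \<Longrightarrow> J p (x i p) = y i p"
    and J_y: "\<And>p i. p \<in> U \<Longrightarrow> i \<in> {1..n} \<Longrightarrow> J p (y i p) = - x i p"
  shows "kaehler_on U g J"
proof -
  interpret kframe U g J n k t x y A B C D E F G H N L
    by (rule kframe.intro) (fact assms)+
  show ?thesis by (rule kaehler)
qed

end
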